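(* For any two elements $w,w'\in W(M)$ one has $l_M(ww')=l_M(w)+l_M(w')$ if and only if $l(ww')=l(w)+l(w')$.
   Context: Let $F$ be a non-archimedean local field and $G$ the group of $F$-points of a connected reductive group over $F$. Fix a minimal parabolic subgroup $P_0=M_0U_0$, a maximal $F$-split torus $A_0\subseteq M_0$, and a standard parabolic subgroup $P=MU\supseteq P_0$ with $M\supseteq M_0$. Let $W=W^G$ be the Weyl group of $G$ with respect to $A_0$, $W^M$ that of $M$, and $l$ the usual length function on $W$ (with respect to the simple roots defined by $P_0$). $W(M)$ denotes the set of elements of $W$ that are of minimal length in their coset $wW^M$, for $w$ running over $\{w\in W: w^{-1}Mw=M\}$; it is a subgroup of $W$. Let $A_M$ be the maximal split central torus of $M$, $\Sigma(A_M)$ the set of nontrivial roots of $A_M$ in the Lie algebra of $G$, $\Sigma(P)$ those occurring in the Lie algebra of $U$, and $\Sigma_{red}(\cdot)$ the reduced roots in a given set; $\overline P$ is the parabolic opposite to $P$ with Levi $M$. For $w\in W(M)$ put $l_M(w)=|\Sigma_{red}(P)\cap\Sigma_{red}(w\overline{P}w^{-1})|$. *)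

theory Defs
  imports "HOL-Analysis.Analysis"
begin

text \<open>The relative root system of G with respect to A_0 is modelled as an abstract
(possibly non-reduced) root system R in a Euclidean space (a_0^* with a W-invariant
inner product). The minimal parabolic P_0 corresponds to a base Delta of R, the standard
parabolic P = MU to a subset Theta of Delta.\<close>

definition refl :: "'a::real_inner \<Rightarrow> 'a \<Rightarrow> 'a" where
  "refl \<alpha> v = v - ((2 * (v \<bullet> \<alpha>)) / (\<alpha> \<bullet> \<alpha>)) *\<^sub>R \<alpha>"

definition root_system :: "'a::euclidean_space set \<Rightarrow> bool" where
  "root_system R \<longleftrightarrow> finite R \<and> 0 \<notin> R \<and>
     (\<forall>\<alpha>\<in>R. \<forall>\<beta>\<in>R. refl \<alpha> \<beta> \<in> R \<and> 2 * (\<beta> \<bullet> \<alpha>) / (\<alpha> \<bullet> \<alpha>) \<in> \<int>)"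

definition is_base :: "'a::euclidean_space set \<Rightarrow> 'a set \<Rightarrow> bool" where
  "is_base R \<Delta> \<longleftrightarrow> \<Delta> \<subseteq> R \<and> independent \<Delta> \<and>
     (\<forall>\<alpha>\<in>R. \<exists>c. (\<forall>\<delta>\<in>\<Delta>. c \<delta> \<in> \<int>) \<and> ((\<forall>\<delta>\<in>\<Delta>. 0 \<le> c \<delta>) \<or> (\<forall>\<delta>\<in>\<Delta>. c \<delta> \<le> 0))
        \<and> \<alpha> = (\<Sum>\<delta>\<in>\<Delta>. c \<delta> *\<^sub>R \<delta>))"

definition positive_root :: "'a::euclidean_space set \<Rightarrow> 'a set \<Rightarrow> 'a \<Rightarrow> bool" where
  "positive_root R \<Delta> \<alpha> \<longleftrightarrow> \<alpha> \<in> R \<and> (\<exists>c. (\<forall>\<delta>\<in>\<Delta>. 0 \<le> c \<delta>) \<and> \<alpha> = (\<Sum>\<delta>\<in>\<Delta>. c \<delta> *\<^sub>R \<delta>))"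

definition negative_root :: "'a::euclidean_space set \<Rightarrow> 'a set \<Rightarrow> 'a \<Rightarrow> bool" where
  "negative_root R \<Delta> \<alpha> \<longleftrightarrow> \<alpha> \<in> R \<and> positive_root R \<Delta> (- \<alpha>)"

inductive_set weyl_group :: "'a::euclidean_space set \<Rightarrow> ('a \<Rightarrow> 'a) set" for R where
  weyl_id: "id \<in> weyl_group R"
| weyl_step: "w \<in> weyl_group R \<Longrightarrow> \<alpha> \<in> R \<Longrightarrow> refl \<alpha> \<circ> w \<in> weyl_group R"

definition simple_word :: "'a::euclidean_space list \<Rightarrow> 'a \<Rightarrow> 'a" where
  "simple_word ss = foldr (\<lambda>\<delta> f. refl \<delta> \<circ> f) ss id"

definition len :: "'a::euclidean_space set \<Rightarrow> ('a \<Rightarrow> 'a) \<Rightarrow> nat" where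
  "len \<Delta> w = (LEAST n. \<exists>ss. length ss = n \<and> set ss \<subseteq> \<Delta> \<and> w = simple_word ss)"

definition levi_roots :: "'a::euclidean_space set \<Rightarrow> 'a set \<Rightarrow> 'a set" where
  "levi_roots R \<Theta> = R \<inter> span \<Theta>"

text \<open>a_M = Lie algebra of A_M inside a_0, and restriction of characters to it.\<close>
definition aM :: "'a::euclidean_space set \<Rightarrow> 'a set" where
  "aM \<Theta> = {x. \<forall>\<delta>\<in>\<Theta>. \<delta> \<bullet> x = 0}"

definition resM :: "'a::euclidean_space set \<Rightarrow> 'a \<Rightarrow> ('a \<Rightarrow> real)" where
  "resM \<Theta> \<alpha> = restrict (\<lambda>x. \<alpha> \<bullet> x) (aM \<Theta>)"

definition roots_AM :: "'a::euclidean_space set \<Rightarrow> 'a set \<Rightarrow> ('a \<Rightarrow> real) set" where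
  "roots_AM R \<Theta> = resM \<Theta> ` R - {resM \<Theta> 0}"

definition reduced_AM :: "'a::euclidean_space set \<Rightarrow> 'a set \<Rightarrow> ('a \<Rightarrow> real) \<Rightarrow> bool" where
  "reduced_AM R \<Theta> \<beta> \<longleftrightarrow> \<beta> \<in> roots_AM R \<Theta> \<and>
     \<not> (\<exists>\<gamma>\<in>roots_AM R \<Theta>. \<exists>c::real. c > 1 \<and> (\<forall>x\<in>aM \<Theta>. \<beta> x = c * \<gamma> x))"

text \<open>Sigma(P): roots of A_M in Lie(U).\<close>
definition roots_P :: "'a::euclidean_space set \<Rightarrow> 'a set \<Rightarrow> 'a set \<Rightarrow> ('a \<Rightarrow> real) set" where
  "roots_P R \<Delta> \<Theta> = resM \<Theta> ` {\<alpha>. positive_root R \<Delta> \<alpha>} - {resM \<Theta> 0}"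

text \<open>Sigma(w Pbar w^-1): roots of A_M in Ad(w) Lie(Ubar).\<close>
definition roots_conj_opp :: "'a::euclidean_space set \<Rightarrow> 'a set \<Rightarrow> 'a set \<Rightarrow> ('a \<Rightarrow> 'a) \<Rightarrow> ('a \<Rightarrow> real) set" where
  "roots_conj_opp R \<Delta> \<Theta> w = resM \<Theta> ` (w ` {\<alpha>. negative_root R \<Delta> \<alpha>}) - {resM \<Theta> 0}"

definition lM :: "'a::euclidean_space set \<Rightarrow> 'a set \<Rightarrow> 'a set \<Rightarrow> ('a \<Rightarrow> 'a) \<Rightarrow> nat" where
  "lM R \<Delta> \<Theta> w = card {\<beta>. reduced_AM R \<Theta> \<beta> \<and> \<beta> \<in> roots_P R \<Delta> \<Theta> \<and> \<beta> \<in> roots_conj_opp R \<Delta> \<Theta> w}"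

definition W_M :: "'a::euclidean_space set \<Rightarrow> 'a set \<Rightarrow> 'a set \<Rightarrow> ('a \<Rightarrow> 'a) set" where
  "W_M R \<Delta> \<Theta> = {w \<in> weyl_group R. w ` levi_roots R \<Theta> = levi_roots R \<Theta> \<and>
      (\<forall>v\<in>weyl_group (levi_roots R \<Theta>). len \<Delta> w \<le> len \<Delta> (w \<circ> v))}"

end

theory Submission
  imports Defs
begin

lemma refl_linear: "linear (refl a)"
  unfolding refl_def by (intro linearI) (auto simp: inner_add_left algebra_simps add_divide_distrib scaleR_add_left[symmetric] simp del: scaleR_add_left)

lemma refl_add: "refl a (x + y) = refl a x + refl a y"
  using refl_linear linear_add by blast
lemma refl_scale: "refl a (c *\<^sub>R x) = c *\<^sub>R refl a x"
  using refl_linear linear_scale by blast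

lemma refl_inner: assumes "a \<noteq> 0" shows "refl a x \<bullet> refl a y = x \<bullet> y"
proof -
  have aa: "a \<bullet> a \<noteq> 0" using assms by simp
  show ?thesis unfolding refl_def using aa
    by (simp add: inner_diff_left inner_diff_right field_simps inner_commute)
qed

lemma refl_invol: assumes "a \<noteq> 0" shows "refl a (refl a x) = x"
proof -
  have aa: "a \<bullet> a \<noteq> 0" using assms by simp
  show ?thesis unfolding refl_def using aa
    by (simp add: inner_diff_left algebra_simps field_simps)
qed

lemma refl_self: assumes "a \<noteq> 0" shows "refl a a = - a"
  using assms unfolding refl_def by (simp add: scaleR_2)

lemma refl_scale_root: assumes "c \<noteq> 0" shows "refl (c *\<^sub>R a) = refl a"
proof
  fix x show "refl (c *\<^sub>R a) x = refl a x"
    using assms unfolding refl_def by (simp add: field_simps power2_eq_square)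
qed

lemma refl_conj:
  assumes "linear f" "\<And>x y. f x \<bullet> f y = x \<bullet> y"
  shows "f (refl a x) = refl (f a) (f x)"
  unfolding refl_def using assms by (simp add: linear_diff linear_scale)

lemma refl_conj_comp:
  assumes "linear f" "\<And>x y. f x \<bullet> f y = x \<bullet> y"
  shows "f \<circ> refl a = refl (f a) \<circ> f"
  using refl_conj[OF assms] by auto

locale RS =
  fixes R \<Delta> :: "'a::euclidean_space set"
  assumes rs: "root_system R" and base: "is_base R \<Delta>"
begin

abbreviation P where "P \<equiv> positive_root R \<Delta>"

lemma finR: "finite R" using rs unfolding root_system_def by auto
lemma zero_notin: "0 \<notin> R" using rs unfolding root_system_def by auto
lemma refl_R: "\<alpha> \<in> R \<Longrightarrow> \<beta> \<in> R \<Longrightarrow> refl \<alpha> \<beta> \<in> R" using rs unfolding root_system_def by auto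
lemma int_R: "\<alpha> \<in> R \<Longrightarrow> \<beta> \<in> R \<Longrightarrow> 2 * (\<beta> \<bullet> \<alpha>) / (\<alpha> \<bullet> \<alpha>) \<in> \<int>" using rs unfolding root_system_def by auto
lemma nz: "\<alpha> \<in> R \<Longrightarrow> \<alpha> \<noteq> 0" using zero_notin by auto
lemma neg_R: "\<alpha> \<in> R \<Longrightarrow> - \<alpha> \<in> R" using refl_R[of \<alpha> \<alpha>] refl_self[OF nz] by metis
lemma D_R: "\<Delta> \<subseteq> R" using base unfolding is_base_def by auto
lemma finD: "finite \<Delta>" using D_R finR finite_subset by auto
lemma indD: "independent \<Delta>" using base unfolding is_base_def by auto

lemma coef_unique:
  assumes "(\<Sum>\<delta>\<in>\<Delta>. c \<delta> *\<^sub>R \<delta>) = (\<Sum>\<delta>\<in>\<Delta>. d \<delta> *\<^sub>R \<delta>)" "\<gamma> \<in> \<Delta>"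
  shows "c \<gamma> = d \<gamma>"
proof (rule ccontr)
  assume ne: "c \<gamma> \<noteq> d \<gamma>"
  have "(\<Sum>\<delta>\<in>\<Delta>. (c \<delta> - d \<delta>) *\<^sub>R \<delta>) = 0"
    using assms(1) by (simp add: scaleR_diff_left sum_subtractf)
  hence "dependent \<Delta>" using dependent_finite[OF finD] ne assms(2)
    by (intro iffD2[OF dependent_finite[OF finD]]) (rule exI[of _ "\<lambda>\<delta>. c \<delta> - d \<delta>"], auto)
  thus False using indD by simp
qed

lemma root_rep: "\<alpha> \<in> R \<Longrightarrow> \<exists>c. (\<forall>\<delta>\<in>\<Delta>. c \<delta> \<in> \<int>) \<and> ((\<forall>\<delta>\<in>\<Delta>. 0 \<le> c \<delta>) \<or> (\<forall>\<delta>\<in>\<Delta>. c \<delta> \<le> 0))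
        \<and> \<alpha> = (\<Sum>\<delta>\<in>\<Delta>. c \<delta> *\<^sub>R \<delta>)"
  using base unfolding is_base_def by auto

lemma pos_coef:
  assumes "\<alpha> \<in> R" "\<alpha> = (\<Sum>\<delta>\<in>\<Delta>. c \<delta> *\<^sub>R \<delta>)" "\<gamma> \<in> \<Delta>" "c \<gamma> > 0"
  shows "P \<alpha>"
proof -
  obtain d where d: "(\<forall>\<delta>\<in>\<Delta>. 0 \<le> d \<delta>) \<or> (\<forall>\<delta>\<in>\<Delta>. d \<delta> \<le> 0)" "\<alpha> = (\<Sum>\<delta>\<in>\<Delta>. d \<delta> *\<^sub>R \<delta>)"
    using root_rep[OF assms(1)] by blast
  have "d \<gamma> = c \<gamma>" using coef_unique[OF trans[OF sym[OF d(2)] assms(2)] assms(3)] .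
  hence "\<forall>\<delta>\<in>\<Delta>. 0 \<le> d \<delta>" using d(1) assms(3,4) by force
  thus ?thesis unfolding positive_root_def using assms(1) d(2) by blast
qed

lemma pos_coef_ge:
  assumes "P \<alpha>" "\<alpha> = (\<Sum>\<delta>\<in>\<Delta>. c \<delta> *\<^sub>R \<delta>)" "\<gamma> \<in> \<Delta>"
  shows "c \<gamma> \<ge> 0"
proof -
  obtain e where e: "\<forall>\<delta>\<in>\<Delta>. 0 \<le> e \<delta>" "\<alpha> = (\<Sum>\<delta>\<in>\<Delta>. e \<delta> *\<^sub>R \<delta>)"
    using assms(1) unfolding positive_root_def by blast
  have "e \<gamma> = c \<gamma>" using coef_unique[OF trans[OF sym[OF e(2)] assms(2)] assms(3)] .
  thus ?thesis using e(1) assms(3) by auto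
qed

lemma not_pos_coef:
  assumes "\<alpha> = (\<Sum>\<delta>\<in>\<Delta>. c \<delta> *\<^sub>R \<delta>)" "\<gamma> \<in> \<Delta>" "c \<gamma> < 0"
  shows "\<not> P \<alpha>"
  using pos_coef_ge[OF _ assms(1,2)] assms(3) by force

lemma pos_R: "P \<alpha> \<Longrightarrow> \<alpha> \<in> R" unfolding positive_root_def by auto

lemma pos_or_neg: assumes "\<alpha> \<in> R" shows "P \<alpha> \<or> P (- \<alpha>)"
proof -
  obtain d where d: "(\<forall>\<delta>\<in>\<Delta>. 0 \<le> d \<delta>) \<or> (\<forall>\<delta>\<in>\<Delta>. d \<delta> \<le> 0)" "\<alpha> = (\<Sum>\<delta>\<in>\<Delta>. d \<delta> *\<^sub>R \<delta>)"
    using root_rep[OF assms(1)] by blast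
  show ?thesis
  proof (cases "\<forall>\<delta>\<in>\<Delta>. 0 \<le> d \<delta>")
    case True
    have "P \<alpha>" unfolding positive_root_def using assms d(2) True by (intro conjI exI[of _ d]) auto
    thus ?thesis ..
  next
    case False
    hence "\<forall>\<delta>\<in>\<Delta>. 0 \<le> - d \<delta>" using d(1) by auto
    moreover have "- \<alpha> = (\<Sum>\<delta>\<in>\<Delta>. (- d \<delta>) *\<^sub>R \<delta>)" using d(2) by (simp add: sum_negf)
    ultimately have "P (- \<alpha>)" unfolding positive_root_def using neg_R[OF assms] by (intro conjI exI[of _ "\<lambda>\<delta>. - d \<delta>"]) auto
    thus ?thesis ..
  qed
qed

lemma not_both: assumes "P \<alpha>" "P (- \<alpha>)" shows False
proof -
  obtain c where c: "\<forall>\<delta>\<in>\<Delta>. 0 \<le> c \<delta>" "\<alpha> = (\<Sum>\<delta>\<in>\<Delta>. c \<delta> *\<^sub>R \<delta>)"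
    using assms(1) unfolding positive_root_def by blast
  obtain d where d: "\<forall>\<delta>\<in>\<Delta>. 0 \<le> d \<delta>" "- \<alpha> = (\<Sum>\<delta>\<in>\<Delta>. d \<delta> *\<^sub>R \<delta>)"
    using assms(2) unfolding positive_root_def by blast
  have "\<alpha> = - (- \<alpha>)" by simp
  also have "\<dots> = (\<Sum>\<delta>\<in>\<Delta>. (- d \<delta>) *\<^sub>R \<delta>)" unfolding d(2) by (simp add: sum_negf)
  finally have "\<alpha> = (\<Sum>\<delta>\<in>\<Delta>. (- d \<delta>) *\<^sub>R \<delta>)" .
  hence eq: "(\<Sum>\<delta>\<in>\<Delta>. c \<delta> *\<^sub>R \<delta>) = (\<Sum>\<delta>\<in>\<Delta>. (\<lambda>x. - d x) \<delta> *\<^sub>R \<delta>)" using trans[OF sym[OF c(2)]] by simp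
  have "\<forall>\<delta>\<in>\<Delta>. c \<delta> = - d \<delta>"
  proof
    fix \<delta> assume "\<delta> \<in> \<Delta>" thus "c \<delta> = - d \<delta>" using coef_unique[OF eq] by simp
  qed
  hence "\<forall>\<delta>\<in>\<Delta>. c \<delta> = 0" using c(1) d(1) by force
  hence "\<alpha> = 0" using c(2) by simp
  thus False using pos_R[OF assms(1)] zero_notin by simp
qed

lemma pos_neg_iff: "\<alpha> \<in> R \<Longrightarrow> P (- \<alpha>) \<longleftrightarrow> \<not> P \<alpha>"
proof -
  assume a: "\<alpha> \<in> R"
  show ?thesis
  proof
    assume "P (- \<alpha>)" thus "\<not> P \<alpha>" using not_both[of \<alpha>] by auto
  next
    assume "\<not> P \<alpha>" thus "P (- \<alpha>)" using pos_or_neg[OF a] by auto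
  qed
qed

lemma negative_iff: "negative_root R \<Delta> \<alpha> \<longleftrightarrow> \<alpha> \<in> R \<and> \<not> P \<alpha>"
  unfolding negative_root_def using pos_neg_iff by auto

lemma pos_scale: assumes "P \<alpha>" "c > 0" "c *\<^sub>R \<alpha> \<in> R" shows "P (c *\<^sub>R \<alpha>)"
proof -
  obtain e where e: "\<forall>\<delta>\<in>\<Delta>. 0 \<le> e \<delta>" "\<alpha> = (\<Sum>\<delta>\<in>\<Delta>. e \<delta> *\<^sub>R \<delta>)"
    using assms(1) unfolding positive_root_def by blast
  have "c *\<^sub>R \<alpha> = (\<Sum>\<delta>\<in>\<Delta>. (c * e \<delta>) *\<^sub>R \<delta>)" using e(2) by (simp add: scaleR_sum_right)
  moreover have "\<forall>\<delta>\<in>\<Delta>. 0 \<le> c * e \<delta>" using e(1) assms(2) by simp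
  ultimately show ?thesis unfolding positive_root_def using assms(3) by (intro conjI exI[of _ "\<lambda>\<delta>. c * e \<delta>"]) auto
qed

lemma pos_scale_iff: assumes "c > 0" "\<alpha> \<in> R" "c *\<^sub>R \<alpha> \<in> R" shows "P (c *\<^sub>R \<alpha>) \<longleftrightarrow> P \<alpha>"
proof
  assume "P (c *\<^sub>R \<alpha>)"
  hence "P (inverse c *\<^sub>R (c *\<^sub>R \<alpha>))" using pos_scale[of "c *\<^sub>R \<alpha>" "inverse c"] assms by simp
  thus "P \<alpha>" using assms(1) by simp
qed (rule pos_scale[OF _ assms(1,3)])

lemma pos_comb:
  assumes "v \<in> R" "finite I" "v = (\<Sum>i\<in>I. a i *\<^sub>R \<beta> i)" "\<forall>i\<in>I. a i \<ge> 0 \<and> P (\<beta> i)"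
  shows "P v"
proof -
  have "\<forall>i\<in>I. \<exists>e. (\<forall>\<delta>\<in>\<Delta>. 0 \<le> e \<delta>) \<and> \<beta> i = (\<Sum>\<delta>\<in>\<Delta>. e \<delta> *\<^sub>R \<delta>)"
  proof
    fix i assume "i \<in> I"
    hence "P (\<beta> i)" using assms(4) by simp
    thus "\<exists>e. (\<forall>\<delta>\<in>\<Delta>. 0 \<le> e \<delta>) \<and> \<beta> i = (\<Sum>\<delta>\<in>\<Delta>. e \<delta> *\<^sub>R \<delta>)"
      unfolding positive_root_def by (elim conjE exE) (intro exI conjI)
  qed
  from bchoice[OF this] obtain e where e: "\<forall>i\<in>I. (\<forall>\<delta>\<in>\<Delta>. 0 \<le> e i \<delta>) \<and> \<beta> i = (\<Sum>\<delta>\<in>\<Delta>. e i \<delta> *\<^sub>R \<delta>)"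
    by blast
  have "v = (\<Sum>i\<in>I. a i *\<^sub>R (\<Sum>\<delta>\<in>\<Delta>. e i \<delta> *\<^sub>R \<delta>))" unfolding assms(3)
    using e by (intro sum.cong) auto
  also have "\<dots> = (\<Sum>\<delta>\<in>\<Delta>. (\<Sum>i\<in>I. a i * e i \<delta>) *\<^sub>R \<delta>)"
    unfolding scaleR_sum_right scaleR_sum_left scaleR_scaleR by (rule sum.swap)
  finally have v: "v = (\<Sum>\<delta>\<in>\<Delta>. (\<Sum>i\<in>I. a i * e i \<delta>) *\<^sub>R \<delta>)" .
  have "\<forall>\<delta>\<in>\<Delta>. 0 \<le> (\<Sum>i\<in>I. a i * e i \<delta>)"
  proof (intro ballI sum_nonneg)
    fix \<delta> i assume "\<delta> \<in> \<Delta>" "i \<in> I"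
    thus "0 \<le> a i * e i \<delta>" using assms(4) e by (meson mult_nonneg_nonneg)
  qed
  thus ?thesis unfolding positive_root_def using assms(1) v by (intro conjI exI[of _ "\<lambda>\<delta>. \<Sum>i\<in>I. a i * e i \<delta>"]) auto
qed

end

context RS begin

abbreviation W where "W \<equiv> weyl_group R"
abbreviation sw where "sw \<equiv> simple_word"

lemma weyl_props: "w \<in> W \<Longrightarrow> linear w \<and> (\<forall>x y. w x \<bullet> w y = x \<bullet> y) \<and> w ` R \<subseteq> R"
proof (induction rule: weyl_group.induct)
  case weyl_id thus ?case by (simp add: linear_id[unfolded id_def])
next
  case (weyl_step w \<alpha>)
  have "linear (refl \<alpha> \<circ> w)" using weyl_step refl_linear linear_compose by blast
  moreover have "\<forall>x y. (refl \<alpha> \<circ> w) x \<bullet> (refl \<alpha> \<circ> w) y = x \<bullet> y"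
    using weyl_step refl_inner[OF nz[OF weyl_step(2)]] by simp
  moreover have "(refl \<alpha> \<circ> w) ` R \<subseteq> R" using weyl_step refl_R by auto
  ultimately show ?case by blast
qed

lemma weyl_linear: "w \<in> W \<Longrightarrow> linear w" using weyl_props by blast
lemma weyl_inner: "w \<in> W \<Longrightarrow> w x \<bullet> w y = x \<bullet> y" using weyl_props by blast
lemma weyl_mapsR: "w \<in> W \<Longrightarrow> \<alpha> \<in> R \<Longrightarrow> w \<alpha> \<in> R" using weyl_props by blast

lemma weyl_inj: assumes "w \<in> W" shows "inj w"
proof (rule injI)
  fix x y assume "w x = w y"
  hence "w (x - y) = 0" using linear_diff[OF weyl_linear[OF assms]] by simp
  hence "(x - y) \<bullet> (x - y) = 0" using weyl_inner[OF assms, of "x - y" "x - y"] by simp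
  thus "x = y" by simp
qed

lemma weyl_R: assumes "w \<in> W" shows "w ` R = R"
  using endo_inj_surj[OF finR _ inj_on_subset[OF weyl_inj[OF assms]]] weyl_mapsR[OF assms] by blast

lemma weyl_add: "w \<in> W \<Longrightarrow> w (x + y) = w x + w y" using weyl_linear linear_add by blast
lemma weyl_scale: "w \<in> W \<Longrightarrow> w (c *\<^sub>R x) = c *\<^sub>R w x" using weyl_linear linear_scale by blast
lemma weyl_neg: "w \<in> W \<Longrightarrow> w (- x) = - w x" using weyl_linear linear_neg by blast

lemma weyl_comp: "w \<in> W \<Longrightarrow> v \<in> W \<Longrightarrow> w \<circ> v \<in> W"
proof (induction rule: weyl_group.induct)
  case weyl_id thus ?case by simp
next
  case (weyl_step w \<alpha>)
  hence "refl \<alpha> \<circ> (w \<circ> v) \<in> W" by (intro weyl_group.weyl_step) blast+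
  thus ?case by (metis comp_assoc)
qed

lemma sw_Cons: "sw (\<delta> # ss) = refl \<delta> \<circ> sw ss" unfolding simple_word_def by simp
lemma sw_Nil: "sw [] = id" unfolding simple_word_def by simp
lemma sw_append: "sw (xs @ ys) = sw xs \<circ> sw ys"
  by (induction xs) (simp_all add: sw_Cons sw_Nil comp_assoc)
lemma sw_snoc: "sw (xs @ [\<delta>]) = sw xs \<circ> refl \<delta>"
  by (simp add: sw_append sw_Cons sw_Nil)

lemma sw_W: "set ss \<subseteq> \<Delta> \<Longrightarrow> sw ss \<in> W"
proof (induction ss)
  case Nil show ?case unfolding sw_Nil by (rule weyl_id)
next
  case (Cons \<delta> ss) thus ?case using D_R unfolding sw_Cons by (intro weyl_step) auto
qed

lemma sw_rev_inv: "set ss \<subseteq> \<Delta> \<Longrightarrow> sw (rev ss) \<circ> sw ss = id"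
proof (induction ss)
  case Nil thus ?case by (simp add: sw_Nil)
next
  case (Cons \<delta> ss)
  have d: "\<delta> \<in> R" using Cons D_R by auto
  have "sw (rev (\<delta> # ss)) \<circ> sw (\<delta> # ss) = sw (rev ss) \<circ> (refl \<delta> \<circ> refl \<delta>) \<circ> sw ss"
    by (simp add: sw_snoc sw_Cons comp_assoc)
  also have "refl \<delta> \<circ> refl \<delta> = id" using refl_invol[OF nz[OF d]] by auto
  finally show ?case using Cons by simp
qed

lemma sw_rev_inv2: "set ss \<subseteq> \<Delta> \<Longrightarrow> sw ss \<circ> sw (rev ss) = id"
  using sw_rev_inv[of "rev ss"] by simp

definition isw where "isw w \<longleftrightarrow> (\<exists>ss. set ss \<subseteq> \<Delta> \<and> w = sw ss)"

lemma isw_comp: "isw a \<Longrightarrow> isw b \<Longrightarrow> isw (a \<circ> b)"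
proof -
  assume "isw a" "isw b"
  then obtain xs ys where "set xs \<subseteq> \<Delta>" "a = sw xs" "set ys \<subseteq> \<Delta>" "b = sw ys" unfolding isw_def by blast
  thus ?thesis unfolding isw_def by (intro exI[of _ "xs @ ys"]) (simp add: sw_append)
qed

lemma refl_isw_pos:
  "\<And>\<alpha> c. P \<alpha> \<Longrightarrow> \<alpha> = (\<Sum>\<delta>\<in>\<Delta>. c \<delta> *\<^sub>R \<delta>) \<Longrightarrow> (\<forall>\<delta>\<in>\<Delta>. c \<delta> \<in> \<int>) \<Longrightarrow> sum c \<Delta> \<le> real n \<Longrightarrow> isw (refl \<alpha>)"
proof (induction n)
  case 0
  have ge: "\<forall>\<delta>\<in>\<Delta>. c \<delta> \<ge> 0" using pos_coef_ge[OF 0(1,2)] by blast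
  hence "\<forall>\<delta>\<in>\<Delta>. c \<delta> = 0" using sum_nonneg_eq_0_iff[OF finD, of c] 0(4) sum_nonneg[of \<Delta> c] by force
  hence "\<alpha> = 0" using 0(2) by simp
  thus ?case using pos_R[OF 0(1)] zero_notin by simp
next
  case (Suc n \<alpha> c)
  have aR: "\<alpha> \<in> R" using pos_R Suc by blast
  have ge: "\<forall>\<delta>\<in>\<Delta>. c \<delta> \<ge> 0" using pos_coef_ge[OF Suc(2,3)] by blast
  have "\<alpha> \<bullet> \<alpha> > 0" using nz[OF aR] by simp
  also have "\<alpha> \<bullet> \<alpha> = (\<Sum>\<delta>\<in>\<Delta>. c \<delta> * (\<alpha> \<bullet> \<delta>))"
    by (subst (2) Suc(3)) (simp add: inner_sum_right)
  finally obtain \<delta> where d: "\<delta> \<in> \<Delta>" "c \<delta> * (\<alpha> \<bullet> \<delta>) > 0"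
    by (metis (no_types, lifting) not_less sum_nonpos)
  have cd: "c \<delta> > 0" and ad: "\<alpha> \<bullet> \<delta> > 0" using d(2) ge d(1)
    by (metis linorder_neqE_linordered_idom mult_nonneg_nonpos not_le zero_less_mult_iff)+
  have dR: "\<delta> \<in> R" using d D_R by auto
  show ?case
  proof (cases "\<forall>\<gamma>\<in>\<Delta> - {\<delta>}. c \<gamma> = 0")
    case True
    have "\<alpha> = c \<delta> *\<^sub>R \<delta>" using Suc(3) sum.remove[OF finD d(1), of "\<lambda>\<gamma>. c \<gamma> *\<^sub>R \<gamma>"] True by simp
    have "c \<delta> \<noteq> 0" using cd by simp
    hence "refl \<alpha> = refl \<delta>" using refl_scale_root[of "c \<delta>" \<delta>] \<open>\<alpha> = c \<delta> *\<^sub>R \<delta>\<close> by simp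
    also have "\<dots> = sw [\<delta>]" by (simp add: sw_Cons sw_Nil)
    finally show ?thesis unfolding isw_def using d(1) by (intro exI[of _ "[\<delta>]"]) auto
  next
    case False
    then obtain \<gamma> where g: "\<gamma> \<in> \<Delta>" "\<gamma> \<noteq> \<delta>" "c \<gamma> \<noteq> 0" by blast
    define k where "k = 2 * (\<alpha> \<bullet> \<delta>) / (\<delta> \<bullet> \<delta>)"
    have kint: "k \<in> \<int>" unfolding k_def using int_R[OF dR aR] .
    have kpos: "k > 0" unfolding k_def using ad nz[OF dR] by simp
    have k1: "k \<ge> 1" using kint kpos by (metis Ints_cases of_int_0_less_iff of_int_1_le_iff zero_less_imp_eq_int int_one_le_iff_zero_less)
    define \<beta> where "\<beta> = refl \<delta> \<alpha>"
    have bR: "\<beta> \<in> R" unfolding \<beta>_def using refl_R[OF dR aR] .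
    define c' where "c' = (\<lambda>x. c x - (if x = \<delta> then k else 0))"
    have "\<beta> = \<alpha> - k *\<^sub>R \<delta>" unfolding \<beta>_def refl_def k_def by simp
    also have "k *\<^sub>R \<delta> = (\<Sum>x\<in>\<Delta>. (if x = \<delta> then k else 0) *\<^sub>R x)"
      using d(1) finD by (simp add: if_distrib[of "\<lambda>t. t *\<^sub>R _"] cong: if_cong)
    finally have b: "\<beta> = (\<Sum>x\<in>\<Delta>. c' x *\<^sub>R x)"
      unfolding c'_def Suc(3) by (simp add: scaleR_diff_left sum_subtractf)
    have pb: "P \<beta>" using pos_coef[OF bR b g(1)] g ge unfolding c'_def by force
    have c'int: "\<forall>x\<in>\<Delta>. c' x \<in> \<int>" using Suc(4) kint unfolding c'_def by auto
    have "sum c' \<Delta> = sum c \<Delta> - k" unfolding c'_def using d(1) finD by (simp add: sum_subtractf)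
    hence "sum c' \<Delta> \<le> real n" using Suc(5) k1 by simp
    hence ib: "isw (refl \<beta>)" using Suc.IH[OF pb b c'int] by simp
    have ai: "\<alpha> = refl \<delta> \<beta>" unfolding \<beta>_def using refl_invol[OF nz[OF dR]] by simp
    have "refl \<delta> \<circ> refl \<beta> = refl (refl \<delta> \<beta>) \<circ> refl \<delta>"
      using refl_conj_comp[OF refl_linear refl_inner[OF nz[OF dR]]] .
    hence "refl \<alpha> = refl \<delta> \<circ> refl \<beta> \<circ> refl \<delta>" unfolding ai[symmetric]
      using refl_invol[OF nz[OF dR]] by (auto simp: fun_eq_iff)
    moreover have "isw (refl \<delta>)" unfolding isw_def using d(1) by (auto intro!: exI[of _ "[\<delta>]"] simp: sw_Cons sw_Nil)
    ultimately show ?thesis using ib isw_comp by metis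
  qed
qed

lemma refl_isw: assumes "\<alpha> \<in> R" shows "isw (refl \<alpha>)"
proof -
  have "\<exists>\<beta>. P \<beta> \<and> refl \<alpha> = refl \<beta>"
  proof (cases "P \<alpha>")
    case True thus ?thesis by blast
  next
    case False
    hence "P (- \<alpha>)" using pos_or_neg[OF assms] by blast
    moreover have "refl (- \<alpha>) = refl \<alpha>" using refl_scale_root[of "-1" \<alpha>] by simp
    ultimately show ?thesis by metis
  qed
  then obtain \<beta> where b: "P \<beta>" "refl \<alpha> = refl \<beta>" by blast
  obtain c where c: "(\<forall>\<delta>\<in>\<Delta>. c \<delta> \<in> \<int>)" "\<beta> = (\<Sum>\<delta>\<in>\<Delta>. c \<delta> *\<^sub>R \<delta>)"
    using root_rep[OF pos_R[OF b(1)]] by blast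
  obtain n :: nat where "sum c \<Delta> \<le> real n" using real_arch_simple by blast
  thus ?thesis using refl_isw_pos[OF b(1) c(2) c(1)] b(2) by simp
qed

lemma weyl_isw: "w \<in> W \<Longrightarrow> isw w"
proof (induction rule: weyl_group.induct)
  case weyl_id thus ?case unfolding isw_def by (auto intro!: exI[of _ "[]"] simp: sw_Nil)
next
  case (weyl_step w \<alpha>) thus ?case using refl_isw isw_comp by blast
qed

end

context RS begin

definition Ind where "Ind = {\<alpha>\<in>R. \<forall>c. 0 < c \<and> c < 1 \<longrightarrow> c *\<^sub>R \<alpha> \<notin> R}"
definition S where "S v = {\<alpha> \<in> Ind. P \<alpha> \<and> \<not> P (v \<alpha>)}"
definition ninv where "ninv v = card (S v)"

lemma Ind_R: "Ind \<subseteq> R" unfolding Ind_def by auto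
lemma finInd: "finite Ind" using finite_subset[OF Ind_R finR] .
lemma finS: "finite (S v)" unfolding S_def using finInd by auto

lemma sum_single: "\<delta> \<in> \<Delta> \<Longrightarrow> (\<Sum>x\<in>\<Delta>. (if x = \<delta> then c else 0) *\<^sub>R x) = c *\<^sub>R \<delta>"
  using finD by (simp add: if_distrib[of "\<lambda>t. t *\<^sub>R _"] cong: if_cong)

lemma mult_simple_int:
  assumes "\<delta> \<in> \<Delta>" "c *\<^sub>R \<delta> \<in> R" shows "c \<in> \<int>"
proof -
  obtain d where d: "\<forall>x\<in>\<Delta>. d x \<in> \<int>" "c *\<^sub>R \<delta> = (\<Sum>x\<in>\<Delta>. d x *\<^sub>R x)"
    using root_rep[OF assms(2)] by blast
  have "(\<Sum>x\<in>\<Delta>. (\<lambda>x. if x = \<delta> then c else 0) x *\<^sub>R x) = (\<Sum>x\<in>\<Delta>. d x *\<^sub>R x)"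
    using sum_single[OF assms(1)] d(2) by simp
  from coef_unique[OF this assms(1)] have "c = d \<delta>" by simp
  thus ?thesis using d(1) assms(1) by simp
qed

lemma simple_pos: "\<delta> \<in> \<Delta> \<Longrightarrow> P \<delta>"
  using pos_coef[of \<delta> "\<lambda>x. if x = \<delta> then 1 else 0" \<delta>] sum_single[of \<delta> 1] D_R by auto

lemma simple_ind: assumes "\<delta> \<in> \<Delta>" shows "\<delta> \<in> Ind"
proof -
  have "\<forall>c. 0 < c \<and> c < 1 \<longrightarrow> c *\<^sub>R \<delta> \<notin> R"
  proof (intro allI impI)
    fix c :: real assume c: "0 < c \<and> c < 1"
    show "c *\<^sub>R \<delta> \<notin> R"
    proof
      assume "c *\<^sub>R \<delta> \<in> R"
      hence "c \<in> \<int>" using mult_simple_int assms by blast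
      thus False using c by (metis Ints_cases of_int_0_less_iff of_int_less_1_iff not_less zero_less_imp_eq_int int_one_le_iff_zero_less)
    qed
  qed
  thus ?thesis unfolding Ind_def using assms D_R by auto
qed

lemma simple_multiple:
  assumes "\<delta> \<in> \<Delta>" "\<alpha> \<in> Ind" "P \<alpha>" "\<alpha> = c *\<^sub>R \<delta>" shows "\<alpha> = \<delta>"
proof -
  have aR: "\<alpha> \<in> R" using assms Ind_R by auto
  have ci: "c \<in> \<int>" using mult_simple_int assms aR by simp
  have "c \<ge> 0" using pos_coef_ge[OF assms(3), of "\<lambda>x. if x = \<delta> then c else 0" \<delta>] sum_single[OF assms(1)] assms by simp
  moreover have "c \<noteq> 0" using nz[OF aR] assms(4) by auto
  ultimately have c1: "c \<ge> 1" using ci by (metis Ints_cases less_eq_real_def of_int_0_less_iff of_int_1_le_iff int_one_le_iff_zero_less)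
  show ?thesis
  proof (cases "c = 1")
    case True thus ?thesis using assms by simp
  next
    case False
    hence "0 < inverse c \<and> inverse c < 1" using c1 by (simp add: inverse_less_1_iff)
    moreover have "inverse c *\<^sub>R \<alpha> = \<delta>" using assms(4) c1 by simp
    ultimately show ?thesis using assms(2) D_R assms(1) unfolding Ind_def by auto
  qed
qed

lemma sr_pos:
  assumes "\<delta> \<in> \<Delta>" "P \<alpha>" "\<not> (\<exists>c. \<alpha> = c *\<^sub>R \<delta>)"
  shows "P (refl \<delta> \<alpha>)"
proof -
  have aR: "\<alpha> \<in> R" using pos_R assms by auto
  have dR: "\<delta> \<in> R" using assms D_R by auto
  obtain c where c: "\<alpha> = (\<Sum>x\<in>\<Delta>. c x *\<^sub>R x)" using root_rep[OF aR] by blast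
  have ge: "\<forall>x\<in>\<Delta>. c x \<ge> 0" using pos_coef_ge[OF assms(2) c] by blast
  have "\<exists>\<gamma>\<in>\<Delta>. \<gamma> \<noteq> \<delta> \<and> c \<gamma> \<noteq> 0"
  proof (rule ccontr)
    assume "\<not> ?thesis"
    hence "(\<Sum>x\<in>\<Delta>-{\<delta>}. c x *\<^sub>R x) = 0" by (intro sum.neutral) auto
    hence "\<alpha> = c \<delta> *\<^sub>R \<delta>" using c sum.remove[OF finD assms(1), of "\<lambda>\<gamma>. c \<gamma> *\<^sub>R \<gamma>"] by simp
    thus False using assms(3) by blast
  qed
  then obtain \<gamma> where g: "\<gamma> \<in> \<Delta>" "\<gamma> \<noteq> \<delta>" "c \<gamma> \<noteq> 0" by blast
  define k where "k = 2 * (\<alpha> \<bullet> \<delta>) / (\<delta> \<bullet> \<delta>)"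
  define c' where "c' = (\<lambda>x. c x - (if x = \<delta> then k else 0))"
  have "refl \<delta> \<alpha> = \<alpha> - k *\<^sub>R \<delta>" unfolding refl_def k_def by simp
  also have "k *\<^sub>R \<delta> = (\<Sum>x\<in>\<Delta>. (if x = \<delta> then k else 0) *\<^sub>R x)" using sum_single[OF assms(1)] by simp
  finally have b: "refl \<delta> \<alpha> = (\<Sum>x\<in>\<Delta>. c' x *\<^sub>R x)"
    unfolding c'_def c by (simp add: scaleR_diff_left sum_subtractf)
  show ?thesis using pos_coef[OF refl_R[OF dR aR] b g(1)] g ge unfolding c'_def by force
qed

lemma Ind_map: assumes "w \<in> W" "\<alpha> \<in> R" shows "w \<alpha> \<in> Ind \<longleftrightarrow> \<alpha> \<in> Ind"
proof -
  have "c *\<^sub>R w \<alpha> \<in> R \<longleftrightarrow> c *\<^sub>R \<alpha> \<in> R" for c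
  proof -
    have "c *\<^sub>R w \<alpha> = w (c *\<^sub>R \<alpha>)" using weyl_scale[OF assms(1)] by simp
    moreover have "w x \<in> R \<longleftrightarrow> x \<in> R" for x
      using weyl_R[OF assms(1)] weyl_inj[OF assms(1)] by (metis imageE image_eqI injD)
    ultimately show ?thesis by simp
  qed
  thus ?thesis unfolding Ind_def using weyl_mapsR[OF assms] assms(2) by auto
qed

lemma neg_Ind: assumes "\<alpha> \<in> Ind" shows "- \<alpha> \<in> Ind"
proof -
  have "c *\<^sub>R (- \<alpha>) \<notin> R" if "0 < c" "c < 1" for c
  proof
    assume "c *\<^sub>R (- \<alpha>) \<in> R"
    hence "- (c *\<^sub>R (- \<alpha>)) \<in> R" by (rule neg_R)
    hence "c *\<^sub>R \<alpha> \<in> R" by simp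
    thus False using assms that unfolding Ind_def by auto
  qed
  thus ?thesis using assms neg_R unfolding Ind_def by auto
qed

lemma ninv_step:
  assumes w: "w \<in> W" and d: "\<delta> \<in> \<Delta>"
  shows "ninv (w \<circ> refl \<delta>) = (if P (w \<delta>) then ninv w + 1 else ninv w - 1) \<and> (\<not> P (w \<delta>) \<longrightarrow> ninv w \<ge> 1)"
proof -
  let ?s = "refl \<delta>"
  have dR: "\<delta> \<in> R" using d D_R by auto
  have sW: "?s \<in> W" using weyl_step[OF weyl_id dR] by simp
  have ss: "?s (?s x) = x" for x using refl_invol[OF nz[OF dR]] .
  have dI: "\<delta> \<in> Ind" and dP: "P \<delta>" using simple_ind simple_pos d by auto
  have wdR: "w \<delta> \<in> R" using weyl_mapsR[OF w dR] .
  have key: "?s ` (S v - {\<delta>}) \<subseteq> S (v \<circ> ?s) - {\<delta>}" if vW: "v \<in> W" for v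
  proof
    fix x assume "x \<in> ?s ` (S v - {\<delta>})"
    then obtain \<alpha> where a: "\<alpha> \<in> S v" "\<alpha> \<noteq> \<delta>" "x = ?s \<alpha>" by blast
    have aI: "\<alpha> \<in> Ind" "P \<alpha>" "\<not> P (v \<alpha>)" using a(1) unfolding S_def by auto
    have aR: "\<alpha> \<in> R" using aI Ind_R by auto
    have nm: "\<not> (\<exists>c. \<alpha> = c *\<^sub>R \<delta>)" using simple_multiple[OF d aI(1,2)] a(2) by blast
    have "P x" using sr_pos[OF d aI(2) nm] a(3) by simp
    moreover have "x \<in> Ind" using Ind_map[OF sW aR] aI a(3) by simp
    moreover have "\<not> P ((v \<circ> ?s) x)" using a(3) ss aI by simp
    moreover have "x \<noteq> \<delta>"
    proof
      assume "x = \<delta>"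
      hence "\<alpha> = ?s \<delta>" using a(3) ss by metis
      hence "\<alpha> = - \<delta>" using refl_self[OF nz[OF dR]] by simp
      thus False using aI(2) dP not_both[of \<delta>] by simp
    qed
    ultimately show "x \<in> S (v \<circ> ?s) - {\<delta>}" unfolding S_def by simp
  qed
  have k1: "?s ` (S w - {\<delta>}) \<subseteq> S (w \<circ> ?s) - {\<delta>}" using key[OF w] .
  have k2: "?s ` (S (w \<circ> ?s) - {\<delta>}) \<subseteq> S (w \<circ> ?s \<circ> ?s) - {\<delta>}" using key[OF weyl_comp[OF w sW]] .
  have "w \<circ> ?s \<circ> ?s = w" using ss by (auto simp: fun_eq_iff)
  hence k2': "?s ` (S (w \<circ> ?s) - {\<delta>}) \<subseteq> S w - {\<delta>}" using k2 by simp
  have eqA: "?s ` (S w - {\<delta>}) = S (w \<circ> ?s) - {\<delta>}"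
  proof
    show "S (w \<circ> ?s) - {\<delta>} \<subseteq> ?s ` (S w - {\<delta>})"
    proof
      fix x assume "x \<in> S (w \<circ> ?s) - {\<delta>}"
      hence "?s x \<in> S w - {\<delta>}" using k2' by blast
      thus "x \<in> ?s ` (S w - {\<delta>})" using ss by (metis image_eqI)
    qed
  qed (rule k1)
  have cardA: "card (S (w \<circ> ?s) - {\<delta>}) = card (S w - {\<delta>})"
    unfolding eqA[symmetric] by (rule card_image) (meson inj_on_subset weyl_inj[OF sW] subset_UNIV)
  have in1: "\<delta> \<in> S (w \<circ> ?s) \<longleftrightarrow> P (w \<delta>)"
    unfolding S_def using dI dP refl_self[OF nz[OF dR]] weyl_neg[OF w] pos_neg_iff[OF wdR] by simp
  have in2: "\<delta> \<in> S w \<longleftrightarrow> \<not> P (w \<delta>)" unfolding S_def using dI dP by simp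
  have c1: "card (S (w \<circ> ?s)) = card (S (w \<circ> ?s) - {\<delta>}) + (if P (w \<delta>) then 1 else 0)"
    using in1 finS card_Diff1_le card.remove[OF finS, of \<delta> "w \<circ> ?s"] by auto
  have c2: "card (S w) = card (S w - {\<delta>}) + (if P (w \<delta>) then 0 else 1)"
    using in2 finS card.remove[OF finS, of \<delta> w] by auto
  show ?thesis unfolding ninv_def using c1 c2 cardA by auto
qed

lemma ninv_id: "ninv id = 0" unfolding ninv_def S_def by simp
lemma ninv_id': "ninv (\<lambda>x. x) = 0" using ninv_id by (simp add: id_def)

lemma ninv_le_len: "set ss \<subseteq> \<Delta> \<Longrightarrow> ninv (sw ss) \<le> length ss"
proof (induction ss rule: rev_induct)
  case Nil thus ?case by (simp add: sw_Nil ninv_id ninv_id')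
next
  case (snoc \<delta> ss)
  have "ninv (sw (ss @ [\<delta>])) = ninv (sw ss \<circ> refl \<delta>)" by (simp add: sw_snoc)
  thus ?case using ninv_step[OF sw_W[of ss] , of \<delta>] snoc by (auto split: if_splits)
qed

lemma ninv_prefix:
  assumes "set ss \<subseteq> \<Delta>" "\<forall>j<length ss. P (sw (take j ss) (ss ! j))"
  shows "\<forall>j\<le>length ss. ninv (sw (take j ss)) = j"
proof (intro allI impI)
  fix j assume "j \<le> length ss"
  thus "ninv (sw (take j ss)) = j"
  proof (induction j)
    case 0 thus ?case by (simp add: sw_Nil ninv_id ninv_id')
  next
    case (Suc j)
    have jl: "j < length ss" using Suc by simp
    have "take (Suc j) ss = take j ss @ [ss ! j]" using jl by (simp add: take_Suc_conv_app_nth)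
    hence "sw (take (Suc j) ss) = sw (take j ss) \<circ> refl (ss ! j)" by (simp add: sw_snoc)
    moreover have "set (take j ss) \<subseteq> \<Delta>" using assms(1) by (meson order_trans set_take_subset)
    moreover have "ss ! j \<in> \<Delta>" using assms(1) jl nth_mem by blast
    ultimately have "ninv (sw (take (Suc j) ss)) = (if P (sw (take j ss) (ss ! j)) then ninv (sw (take j ss)) + 1 else ninv (sw (take j ss)) - 1)"
      using ninv_step[OF sw_W, of "take j ss" "ss ! j"] by metis
    thus ?case using assms(2) jl Suc by simp
  qed
qed

lemma discrete_switch: "f j \<Longrightarrow> \<not> f (0::nat) \<Longrightarrow> \<exists>i<j. f (Suc i) \<and> \<not> f i"
proof (induction j)
  case 0 thus ?case by simp
next
  case (Suc j) thus ?case by (cases "f j") (auto intro: less_SucI)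
qed

lemma deletion:
  assumes ss: "set ss \<subseteq> \<Delta>" and lt: "ninv (sw ss) < length ss"
  shows "\<exists>ts. set ts \<subseteq> \<Delta> \<and> sw ts = sw ss \<and> length ts < length ss"
proof -
  have "\<exists>j<length ss. \<not> P (sw (take j ss) (ss ! j))"
  proof (rule ccontr)
    assume "\<not> ?thesis"
    hence "ninv (sw (take (length ss) ss)) = length ss" using ninv_prefix[OF ss] by auto
    thus False using lt by simp
  qed
  then obtain j where j: "j < length ss" "\<not> P (sw (take j ss) (ss ! j))" by blast
  define u where "u i = sw (drop i (take j ss))" for i
  have setu: "set (drop i (take j ss)) \<subseteq> \<Delta>" for i using ss by (meson order_trans set_drop_subset set_take_subset)
  have uW: "u i \<in> W" for i unfolding u_def using sw_W[OF setu] .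
  have sjD: "ss ! j \<in> \<Delta>" using ss j nth_mem by blast
  have sjR: "ss ! j \<in> R" using sjD D_R by auto
  have "\<exists>i<j. P (u (Suc i) (ss ! j)) \<and> \<not> P (u i (ss ! j))"
  proof (rule discrete_switch[where f = "\<lambda>i. P (u i (ss ! j))"])
    show "P (u j (ss ! j))" unfolding u_def using simple_pos[OF sjD] j by (simp add: sw_Nil)
    show "\<not> P (u 0 (ss ! j))" unfolding u_def using j by simp
  qed
  then obtain i where i: "i < j" "P (u (Suc i) (ss ! j))" "\<not> P (u i (ss ! j))" by blast
  have siD: "ss ! i \<in> \<Delta>" using ss i j nth_mem by (meson order.strict_trans subsetD)
  have siR: "ss ! i \<in> R" using siD D_R by auto
  have dec: "drop i (take j ss) = ss ! i # drop (Suc i) (take j ss)"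
    using i j by (metis Cons_nth_drop_Suc length_take min.absorb4 nth_take)
  have ui: "u i = refl (ss ! i) \<circ> u (Suc i)" unfolding u_def dec by (simp add: sw_Cons)
  define \<beta> where "\<beta> = u (Suc i) (ss ! j)"
  have "\<not> P (refl (ss ! i) \<beta>)" using i(3) ui unfolding \<beta>_def by simp
  then obtain c where c: "\<beta> = c *\<^sub>R (ss ! i)" using sr_pos[OF siD i(2)[folded \<beta>_def]] by blast
  have "c \<noteq> 0" using c nz[OF weyl_mapsR[OF uW sjR]] unfolding \<beta>_def by auto
  hence rb: "refl \<beta> = refl (ss ! i)" using c refl_scale_root by simp
  have conj: "u (Suc i) \<circ> refl (ss ! j) = refl \<beta> \<circ> u (Suc i)" unfolding \<beta>_def
    using refl_conj_comp[OF weyl_linear[OF uW] weyl_inner[OF uW]] .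
  have sjj: "refl (ss ! j) \<circ> refl (ss ! j) = id" using refl_invol[OF nz[OF sjR]] by (auto simp: fun_eq_iff)
  have uij: "u i \<circ> refl (ss ! j) = u (Suc i)"
  proof -
    have "u i \<circ> refl (ss ! j) = u (Suc i) \<circ> refl (ss ! j) \<circ> refl (ss ! j)"
      unfolding ui conj rb by (simp add: comp_assoc)
    also have "\<dots> = u (Suc i)" using sjj by (simp add: comp_assoc)
    finally show ?thesis .
  qed
  have l1: "take i ss @ drop i (take j ss) = take j ss"
    using i by (metis append_take_drop_id min.absorb1 less_imp_le take_take)
  have l2: "take j ss @ [ss ! j] @ drop (Suc j) ss = ss"
    using j by (metis append_assoc append_take_drop_id take_Suc_conv_app_nth)
  have "sw ss = sw (take i ss) \<circ> u i \<circ> refl (ss ! j) \<circ> sw (drop (Suc j) ss)"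
    unfolding u_def
    by (subst (1) l2[symmetric], subst (1) l1[symmetric]) (simp add: sw_append sw_Cons sw_Nil comp_assoc)
  also have "\<dots> = sw (take i ss @ drop (Suc i) (take j ss) @ drop (Suc j) ss)"
    using uij unfolding u_def by (simp add: sw_append comp_assoc)
  finally have eq: "sw (take i ss @ drop (Suc i) (take j ss) @ drop (Suc j) ss) = sw ss" by simp
  have "set (take i ss @ drop (Suc i) (take j ss) @ drop (Suc j) ss) \<subseteq> \<Delta>"
    using ss setu by (auto dest: in_set_takeD in_set_dropD)
  moreover have "length (take i ss @ drop (Suc i) (take j ss) @ drop (Suc j) ss) < length ss"
    using i j by simp
  ultimately show ?thesis using eq by blast
qed

lemma len_sw: assumes "set ss \<subseteq> \<Delta>" shows "len \<Delta> (sw ss) = ninv (sw ss)"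
proof -
  let ?Q = "\<lambda>n. \<exists>ts. length ts = n \<and> set ts \<subseteq> \<Delta> \<and> sw ss = simple_word ts"
  have ex: "?Q (length ss)" using assms by blast
  have lq: "?Q (len \<Delta> (sw ss))" unfolding len_def by (rule LeastI_ex) (use ex in blast)
  then obtain ts where ts: "length ts = len \<Delta> (sw ss)" "set ts \<subseteq> \<Delta>" "sw ss = sw ts" by blast
  have le: "ninv (sw ss) \<le> len \<Delta> (sw ss)" using ninv_le_len[OF ts(2)] ts by simp
  show ?thesis
  proof (rule ccontr)
    assume "len \<Delta> (sw ss) \<noteq> ninv (sw ss)"
    hence "ninv (sw ts) < length ts" using le ts by simp
    then obtain us where us: "set us \<subseteq> \<Delta>" "sw us = sw ts" "length us < length ts" using deletion[OF ts(2)] by blast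
    have "?Q (length us)" using us ts by auto
    hence "len \<Delta> (sw ss) \<le> length us" unfolding len_def by (rule Least_le)
    thus False using us ts by simp
  qed
qed

lemma len_W: assumes "w \<in> W" shows "len \<Delta> w = ninv w"
  using weyl_isw[OF assms] len_sw unfolding isw_def by blast

end

context RS begin

definition Dset where "Dset v = {\<alpha> \<in> Ind. P \<alpha> \<noteq> P (v \<alpha>)}"
definition Nset where "Nset v = {\<alpha> \<in> Ind. \<not> P \<alpha> \<and> P (v \<alpha>)}"

lemma card_D: assumes v: "v \<in> W" shows "card (Dset v) = 2 * ninv v"
proof -
  have un: "Dset v = S v \<union> Nset v" unfolding Dset_def S_def Nset_def by auto
  have dj: "S v \<inter> Nset v = {}" unfolding S_def Nset_def by auto
  have im: "uminus ` S v = Nset v"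
  proof
    show "uminus ` S v \<subseteq> Nset v"
    proof
      fix x assume "x \<in> uminus ` S v"
      then obtain a where a: "a \<in> S v" "x = - a" by blast
      have aI: "a \<in> Ind" "P a" "\<not> P (v a)" using a(1) unfolding S_def by auto
      have aR: "a \<in> R" using aI Ind_R by auto
      have vaR: "v a \<in> R" using weyl_mapsR[OF v aR] .
      show "x \<in> Nset v" unfolding Nset_def a(2) using neg_Ind[OF aI(1)] aI pos_neg_iff[OF aR] pos_neg_iff[OF vaR] weyl_neg[OF v] by simp
    qed
    show "Nset v \<subseteq> uminus ` S v"
    proof
      fix x assume x: "x \<in> Nset v"
      have aI: "x \<in> Ind" "\<not> P x" "P (v x)" using x unfolding Nset_def by auto
      have aR: "x \<in> R" using aI Ind_R by auto
      have vaR: "v x \<in> R" using weyl_mapsR[OF v aR] .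
      have "- x \<in> S v" unfolding S_def using neg_Ind[OF aI(1)] aI pos_neg_iff[OF aR] pos_neg_iff[OF vaR] weyl_neg[OF v] by simp
      thus "x \<in> uminus ` S v" by (metis image_eqI minus_minus)
    qed
  qed
  have "card (Nset v) = card (S v)" unfolding im[symmetric] by (rule card_image) (simp add: inj_on_def)
  moreover have "finite (Nset v)" unfolding Nset_def using finInd by simp
  ultimately show ?thesis unfolding un ninv_def using card_Un_disjoint[OF finS _ dj] by simp
qed

definition Eset where "Eset w w' = {\<alpha> \<in> Ind. P \<alpha> \<noteq> P (w' \<alpha>) \<and> P (w' \<alpha>) \<noteq> P (w (w' \<alpha>))}"

lemma card_filter_sum: "finite A \<Longrightarrow> card {x\<in>A. Q x} = (\<Sum>x\<in>A. if Q x then 1 else 0 :: nat)"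
  using sum.inter_filter[of A "\<lambda>x. 1::nat" Q] by simp

lemma Ind_bij: assumes "w \<in> W" shows "w ` Ind = Ind"
proof
  show "w ` Ind \<subseteq> Ind" using Ind_map[OF assms] Ind_R by auto
  show "Ind \<subseteq> w ` Ind"
  proof
    fix b assume b: "b \<in> Ind"
    then obtain a where a: "a \<in> R" "b = w a" using weyl_R[OF assms] Ind_R by (metis imageE subsetD)
    thus "b \<in> w ` Ind" using Ind_map[OF assms a(1)] b by auto
  qed
qed

lemma card_D_comp:
  assumes w: "w \<in> W" and w': "w' \<in> W"
  shows "card (Dset (w \<circ> w')) + 2 * card (Eset w w') = card (Dset w) + card (Dset w')"
proof -
  have cw: "card (Dset w) = card {\<alpha> \<in> Ind. P (w' \<alpha>) \<noteq> P (w (w' \<alpha>))}"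
  proof -
    have e1: "w' ` {\<alpha> \<in> Ind. P (w' \<alpha>) \<noteq> P (w (w' \<alpha>))} = {\<beta> \<in> w' ` Ind. P \<beta> \<noteq> P (w \<beta>)}" by auto
    have e2: "w' ` {\<alpha> \<in> Ind. P (w' \<alpha>) \<noteq> P (w (w' \<alpha>))} = Dset w" unfolding e1 Ind_bij[OF w'] Dset_def ..
    have inj: "inj_on w' {\<alpha> \<in> Ind. P (w' \<alpha>) \<noteq> P (w (w' \<alpha>))}" using inj_on_subset[OF weyl_inj[OF w'] subset_UNIV] .
    show ?thesis using card_image[OF inj] unfolding e2 by simp
  qed
  have pw: "\<And>a b c. (if a \<noteq> c then 1 else 0) + 2 * (if a \<noteq> b \<and> b \<noteq> (c::bool) then 1 else 0) =
     (if b \<noteq> c then 1 else 0) + (if a \<noteq> b then 1 else (0::nat))" by auto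
  have "card (Dset (w \<circ> w')) + 2 * card (Eset w w') =
     (\<Sum>x\<in>Ind. (if P x \<noteq> P (w (w' x)) then 1 else 0) + 2 * (if P x \<noteq> P (w' x) \<and> P (w' x) \<noteq> P (w (w' x)) then 1 else 0))"
    unfolding Dset_def Eset_def card_filter_sum[OF finInd] sum.distrib sum_distrib_left by simp
  also have "\<dots> = (\<Sum>x\<in>Ind. (if P (w' x) \<noteq> P (w (w' x)) then 1 else 0) + (if P x \<noteq> P (w' x) then 1 else 0))"
    by (rule sum.cong[OF refl]) (rule pw)
  also have "\<dots> = card {\<alpha> \<in> Ind. P (w' \<alpha>) \<noteq> P (w (w' \<alpha>))} + card (Dset w')"
    unfolding Dset_def card_filter_sum[OF finInd] sum.distrib by simp
  finally show ?thesis using cw by simp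
qed

lemma inj_scale: fixes a :: "'a::euclidean_space" assumes "a \<noteq> 0" shows "inj (\<lambda>c::real. c *\<^sub>R a)"
  using assms by (intro injI) (simp add: scaleR_cancel_right)

lemma ind_multiple: assumes "\<alpha> \<in> R" shows "\<exists>c>0. c *\<^sub>R \<alpha> \<in> Ind"
proof -
  define C where "C = {c::real. c > 0 \<and> c *\<^sub>R \<alpha> \<in> R}"
  have "inj_on (\<lambda>c. c *\<^sub>R \<alpha>) C" using inj_on_subset[OF inj_scale[OF nz[OF assms]] subset_UNIV] .
  moreover have "(\<lambda>c. c *\<^sub>R \<alpha>) ` C \<subseteq> R" unfolding C_def by auto
  ultimately have fC: "finite C" by (meson finite_subset[OF _ finR] finite_imageD)
  have "1 \<in> C" unfolding C_def using assms by simp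
  hence ne: "C \<noteq> {}" by auto
  define c0 where "c0 = Min C"
  have c0C: "c0 \<in> C" unfolding c0_def using Min_in[OF fC ne] .
  have "c0 *\<^sub>R \<alpha> \<in> Ind"
    unfolding Ind_def
  proof (intro CollectI conjI allI impI)
    show "c0 *\<^sub>R \<alpha> \<in> R" using c0C unfolding C_def by simp
    fix d :: real assume d: "0 < d \<and> d < 1"
    show "d *\<^sub>R c0 *\<^sub>R \<alpha> \<notin> R"
    proof
      assume "d *\<^sub>R c0 *\<^sub>R \<alpha> \<in> R"
      hence "d * c0 \<in> C" using d c0C unfolding C_def by simp
      hence "c0 \<le> d * c0" unfolding c0_def using Min_le[OF fC] by simp
      moreover have "c0 > 0" using c0C unfolding C_def by simp
      moreover have "d * c0 < 1 * c0" using d \<open>c0 > 0\<close> by (intro mult_strict_right_mono) auto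
      ultimately show False by simp
    qed
  qed
  moreover have "c0 > 0" using c0C unfolding C_def by simp
  ultimately show ?thesis by (intro exI[of _ c0]) simp
qed

definition Eprop where "Eprop w w' \<alpha> \<longleftrightarrow> P \<alpha> \<noteq> P (w' \<alpha>) \<and> P (w' \<alpha>) \<noteq> P (w (w' \<alpha>))"

lemma Eprop_scale:
  assumes w: "w \<in> W" and w': "w' \<in> W" and a: "\<alpha> \<in> R" and c: "c > 0" "c *\<^sub>R \<alpha> \<in> R"
  shows "Eprop w w' (c *\<^sub>R \<alpha>) \<longleftrightarrow> Eprop w w' \<alpha>"
proof -
  have r1: "w' \<alpha> \<in> R" using weyl_mapsR[OF w' a] .
  have r2: "w (w' \<alpha>) \<in> R" using weyl_mapsR[OF w r1] .
  have e1: "w' (c *\<^sub>R \<alpha>) = c *\<^sub>R w' \<alpha>" using weyl_scale[OF w'] .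
  have e2: "w (c *\<^sub>R w' \<alpha>) = c *\<^sub>R w (w' \<alpha>)" using weyl_scale[OF w] by simp
  have m1: "c *\<^sub>R w' \<alpha> \<in> R" using weyl_mapsR[OF w' c(2)] e1 by simp
  have m2: "c *\<^sub>R w (w' \<alpha>) \<in> R" using weyl_mapsR[OF w weyl_mapsR[OF w' c(2)]] e1 e2 by simp
  show ?thesis unfolding Eprop_def e1 e2
    using pos_scale_iff[OF c(1) a c(2)] pos_scale_iff[OF c(1) r1 m1] pos_scale_iff[OF c(1) r2 m2] by simp
qed

lemma len_additive_iff:
  assumes w: "w \<in> W" and w': "w' \<in> W"
  shows "len \<Delta> (w \<circ> w') = len \<Delta> w + len \<Delta> w' \<longleftrightarrow> \<not> (\<exists>\<alpha>\<in>R. Eprop w w' \<alpha>)"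
proof -
  have ww: "w \<circ> w' \<in> W" using weyl_comp[OF w w'] .
  have "len \<Delta> (w \<circ> w') = len \<Delta> w + len \<Delta> w' \<longleftrightarrow> card (Eset w w') = 0"
    using card_D_comp[OF w w'] card_D[OF w] card_D[OF w'] card_D[OF ww] len_W[OF w] len_W[OF w'] len_W[OF ww] by auto
  also have "\<dots> \<longleftrightarrow> Eset w w' = {}" using finInd unfolding Eset_def by simp
  also have "\<dots> \<longleftrightarrow> \<not> (\<exists>\<alpha>\<in>R. Eprop w w' \<alpha>)"
  proof
    assume "Eset w w' = {}"
    show "\<not> (\<exists>\<alpha>\<in>R. Eprop w w' \<alpha>)"
    proof
      assume "\<exists>\<alpha>\<in>R. Eprop w w' \<alpha>"
      then obtain \<alpha> where a: "\<alpha> \<in> R" "Eprop w w' \<alpha>" by blast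
      obtain c where c: "c > 0" "c *\<^sub>R \<alpha> \<in> Ind" using ind_multiple[OF a(1)] by blast
      have "Eprop w w' (c *\<^sub>R \<alpha>)" using Eprop_scale[OF w w' a(1) c(1)] c(2) Ind_R a(2) by auto
      hence "c *\<^sub>R \<alpha> \<in> Eset w w'" unfolding Eset_def Eprop_def using c(2) by simp
      thus False using \<open>Eset w w' = {}\<close> by simp
    qed
  next
    assume "\<not> (\<exists>\<alpha>\<in>R. Eprop w w' \<alpha>)"
    thus "Eset w w' = {}" unfolding Eset_def Eprop_def using Ind_R by auto
  qed
  finally show ?thesis .
qed

end

locale RSM = RS +
  fixes \<Theta> :: "'a::euclidean_space set"
  assumes ThD: "\<Theta> \<subseteq> \<Delta>"
begin

abbreviation levi where "levi \<equiv> levi_roots R \<Theta>"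
abbreviation res where "res \<equiv> resM \<Theta>"
abbreviation aMM where "aMM \<equiv> aM \<Theta>"
abbreviation spT where "spT \<equiv> span \<Theta>"

lemma finT: "finite \<Theta>" using finite_subset[OF ThD finD] .
lemma T_R: "\<Theta> \<subseteq> R" using ThD D_R by auto
lemma levi_iff: "\<alpha> \<in> levi \<longleftrightarrow> \<alpha> \<in> R \<and> \<alpha> \<in> spT" unfolding levi_roots_def by auto
lemma T_levi: "\<Theta> \<subseteq> levi" using T_R span_superset unfolding levi_roots_def by auto

lemma span_perp: assumes "v \<in> spT" "x \<in> aMM" shows "v \<bullet> x = 0"
proof -
  have "orthogonal x v"
    by (rule orthogonal_to_span[OF assms(1)]) (use assms(2) in \<open>auto simp: aM_def orthogonal_def inner_commute\<close>)
  thus ?thesis by (simp add: orthogonal_def inner_commute)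
qed

lemma perp_span: assumes "\<forall>x\<in>aMM. u \<bullet> x = 0" shows "u \<in> spT"
proof -
  obtain y z where yz: "y \<in> spT" "\<And>w. w \<in> spT \<Longrightarrow> orthogonal z w" "u = y + z"
    using orthogonal_subspace_decomp_exists[of \<Theta> u] by blast
  have zA: "z \<in> aMM" unfolding aM_def
  proof (intro CollectI ballI)
    fix \<delta> assume "\<delta> \<in> \<Theta>"
    hence "orthogonal z \<delta>" using yz(2) span_base by blast
    thus "\<delta> \<bullet> z = 0" by (simp add: orthogonal_def inner_commute)
  qed
  have "u \<bullet> z = 0" using assms zA by blast
  moreover have "y \<bullet> z = 0" using yz(2)[OF yz(1)] by (simp add: orthogonal_def inner_commute)
  ultimately have "z \<bullet> z = 0" using yz(3) by (simp add: inner_add_left)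
  hence "z = 0" by simp
  thus ?thesis using yz by simp
qed

lemma res_eq_iff: "res \<alpha> = res \<beta> \<longleftrightarrow> \<alpha> - \<beta> \<in> spT"
proof
  assume "res \<alpha> = res \<beta>"
  hence "\<forall>x\<in>aMM. \<alpha> \<bullet> x = \<beta> \<bullet> x" unfolding resM_def by (metis restrict_apply')
  hence "\<forall>x\<in>aMM. (\<alpha> - \<beta>) \<bullet> x = 0" by (simp add: inner_diff_left)
  thus "\<alpha> - \<beta> \<in> spT" by (rule perp_span)
next
  assume "\<alpha> - \<beta> \<in> spT"
  hence "\<forall>x\<in>aMM. (\<alpha> - \<beta>) \<bullet> x = 0" using span_perp by blast
  hence "\<forall>x\<in>aMM. \<alpha> \<bullet> x = \<beta> \<bullet> x" by (simp add: inner_diff_left)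
  thus "res \<alpha> = res \<beta>" unfolding resM_def by (intro restrict_ext) auto
qed

lemma res0_iff: "res \<alpha> = res 0 \<longleftrightarrow> \<alpha> \<in> spT" using res_eq_iff[of \<alpha> 0] by simp

lemma res_apply: "x \<in> aMM \<Longrightarrow> res \<alpha> x = \<alpha> \<bullet> x" unfolding resM_def by simp

lemma mult_rel_iff: "(\<forall>x\<in>aMM. res \<alpha> x = c * res \<beta> x) \<longleftrightarrow> \<alpha> - c *\<^sub>R \<beta> \<in> spT"
proof
  assume "\<forall>x\<in>aMM. res \<alpha> x = c * res \<beta> x"
  hence "\<forall>x\<in>aMM. (\<alpha> - c *\<^sub>R \<beta>) \<bullet> x = 0" by (simp add: res_apply inner_diff_left)
  thus "\<alpha> - c *\<^sub>R \<beta> \<in> spT" by (rule perp_span)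
next
  assume "\<alpha> - c *\<^sub>R \<beta> \<in> spT"
  hence "\<forall>x\<in>aMM. (\<alpha> - c *\<^sub>R \<beta>) \<bullet> x = 0" using span_perp by blast
  thus "\<forall>x\<in>aMM. res \<alpha> x = c * res \<beta> x" by (simp add: res_apply inner_diff_left)
qed

lemma sum_T_span: "(\<Sum>\<delta>\<in>\<Theta>. e \<delta> *\<^sub>R \<delta>) \<in> spT"
  by (intro span_sum span_scale span_base)

lemma coef_span_rel:
  assumes "\<alpha> = (\<Sum>\<delta>\<in>\<Delta>. c \<delta> *\<^sub>R \<delta>)" "\<beta> = (\<Sum>\<delta>\<in>\<Delta>. d \<delta> *\<^sub>R \<delta>)" "\<alpha> - k *\<^sub>R \<beta> \<in> spT"
    "\<gamma> \<in> \<Delta>" "\<gamma> \<notin> \<Theta>"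
  shows "c \<gamma> = k * d \<gamma>"
proof -
  obtain e where e: "\<alpha> - k *\<^sub>R \<beta> = (\<Sum>\<delta>\<in>\<Theta>. e \<delta> *\<^sub>R \<delta>)"
    using assms(3) span_finite[OF finT] by blast
  define e' where "e' = (\<lambda>\<delta>. if \<delta> \<in> \<Theta> then e \<delta> else 0)"
  have "(\<Sum>\<delta>\<in>\<Delta>. e' \<delta> *\<^sub>R \<delta>) = (\<Sum>\<delta>\<in>\<Theta>. e' \<delta> *\<^sub>R \<delta>)"
    using finD ThD by (intro sum.mono_neutral_right) (auto simp: e'_def)
  also have "\<dots> = (\<Sum>\<delta>\<in>\<Theta>. e \<delta> *\<^sub>R \<delta>)" unfolding e'_def by (intro sum.cong) auto
  finally have eq1: "(\<Sum>\<delta>\<in>\<Delta>. e' \<delta> *\<^sub>R \<delta>) = \<alpha> - k *\<^sub>R \<beta>" using e by simp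
  have "\<alpha> - k *\<^sub>R \<beta> = (\<Sum>\<delta>\<in>\<Delta>. (c \<delta> - k * d \<delta>) *\<^sub>R \<delta>)"
    unfolding assms(1,2) by (simp add: scaleR_diff_left sum_subtractf scaleR_sum_right)
  hence "(\<Sum>\<delta>\<in>\<Delta>. e' \<delta> *\<^sub>R \<delta>) = (\<Sum>\<delta>\<in>\<Delta>. (\<lambda>\<delta>. c \<delta> - k * d \<delta>) \<delta> *\<^sub>R \<delta>)" using eq1 by simp
  from coef_unique[OF this assms(4)] have "e' \<gamma> = c \<gamma> - k * d \<gamma>" by simp
  thus ?thesis using assms(5) unfolding e'_def by simp
qed

lemma nonlevi_coef:
  assumes "\<alpha> = (\<Sum>\<delta>\<in>\<Delta>. c \<delta> *\<^sub>R \<delta>)" "\<alpha> \<notin> spT"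
  shows "\<exists>\<gamma>\<in>\<Delta> - \<Theta>. c \<gamma> \<noteq> 0"
proof (rule ccontr)
  assume "\<not> ?thesis"
  hence "(\<Sum>\<delta>\<in>\<Delta>. c \<delta> *\<^sub>R \<delta>) = (\<Sum>\<delta>\<in>\<Theta>. c \<delta> *\<^sub>R \<delta>)"
    using finD ThD by (intro sum.mono_neutral_right) auto
  hence "\<alpha> \<in> spT" using assms(1) sum_T_span by simp
  thus False using assms(2) by simp
qed

lemma sign_rel:
  assumes "\<alpha> \<in> R" "\<beta> \<in> R" "\<alpha> \<notin> spT" "k > 0" "\<alpha> - k *\<^sub>R \<beta> \<in> spT"
  shows "P \<alpha> \<longleftrightarrow> P \<beta>"
proof -
  obtain c where c: "\<alpha> = (\<Sum>\<delta>\<in>\<Delta>. c \<delta> *\<^sub>R \<delta>)" using root_rep[OF assms(1)] by blast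
  obtain d where d: "\<beta> = (\<Sum>\<delta>\<in>\<Delta>. d \<delta> *\<^sub>R \<delta>)" using root_rep[OF assms(2)] by blast
  obtain \<gamma> where g: "\<gamma> \<in> \<Delta>" "\<gamma> \<notin> \<Theta>" "c \<gamma> \<noteq> 0" using nonlevi_coef[OF c assms(3)] by blast
  have cd: "c \<gamma> = k * d \<gamma>" using coef_span_rel[OF c d assms(5) g(1,2)] .
  show ?thesis
  proof (cases "c \<gamma> > 0")
    case True
    hence "d \<gamma> > 0" using cd assms(4) by (simp add: zero_less_mult_iff)
    thus ?thesis using pos_coef[OF assms(1) c g(1) True] pos_coef[OF assms(2) d g(1)] by simp
  next
    case False
    hence cn: "c \<gamma> < 0" using g(3) by simp
    hence "d \<gamma> < 0" using cd assms(4) by (simp add: mult_less_0_iff)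
    thus ?thesis using not_pos_coef[OF c g(1) cn] not_pos_coef[OF d g(1)] by simp
  qed
qed

end

context RSM begin

definition good where "good v \<longleftrightarrow> v \<in> W \<and> v ` levi = levi"

lemma good_span: assumes "good v" "u \<in> spT" shows "v u \<in> spT"
proof -
  have lin: "linear v" using assms(1) weyl_linear unfolding good_def by blast
  have "v ` \<Theta> \<subseteq> spT" using assms(1) T_levi unfolding good_def levi_roots_def by auto
  hence "span (v ` \<Theta>) \<subseteq> spT" by (intro span_minimal) auto
  hence "v ` spT \<subseteq> spT" using span_linear_image[OF lin, of \<Theta>] by simp
  thus ?thesis using assms(2) by blast
qed

lemma good_W: "good v \<Longrightarrow> v \<in> W" unfolding good_def by simp

lemma good_comp: "good w \<Longrightarrow> good w' \<Longrightarrow> good (w \<circ> w')"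
proof -
  assume a: "good w" "good w'"
  have "(w \<circ> w') ` levi = w ` (w' ` levi)" by (rule image_comp[symmetric])
  thus ?thesis using a weyl_comp unfolding good_def by simp
qed

lemma good_inv: assumes "good v" shows "\<exists>u. good u \<and> (\<forall>x. u (v x) = x) \<and> (\<forall>x. v (u x) = x)"
proof -
  obtain ss where ss: "set ss \<subseteq> \<Delta>" "v = sw ss" using weyl_isw good_W[OF assms] unfolding isw_def by blast
  define u where "u = sw (rev ss)"
  have uW: "u \<in> W" unfolding u_def using sw_W[of "rev ss"] ss(1) by simp
  have i1: "\<forall>x. u (v x) = x" using sw_rev_inv[OF ss(1)] ss(2) unfolding u_def by (metis comp_apply id_apply)
  have i2: "\<forall>x. v (u x) = x" using sw_rev_inv2[OF ss(1)] ss(2) unfolding u_def by (metis comp_apply id_apply)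
  have "u ` levi = u ` (v ` levi)" using assms unfolding good_def by simp
  also have "\<dots> = levi" using i1 by (simp add: image_image)
  finally show ?thesis using uW i1 i2 unfolding good_def by blast
qed

lemma nonlevi_pres: assumes "good v" "\<alpha> \<in> R" "\<alpha> \<notin> spT" shows "v \<alpha> \<notin> spT"
proof
  assume "v \<alpha> \<in> spT"
  hence "v \<alpha> \<in> levi" using weyl_mapsR[OF good_W[OF assms(1)] assms(2)] levi_iff by simp
  hence "v \<alpha> \<in> v ` levi" using assms(1) unfolding good_def by simp
  then obtain \<beta> where "\<beta> \<in> levi" "v \<alpha> = v \<beta>" by blast
  hence "\<alpha> = \<beta>" using weyl_inj[OF good_W[OF assms(1)]] by (simp add: inj_eq)
  thus False using \<open>\<beta> \<in> levi\<close> assms(3) levi_iff by simp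
qed

lemma good_rel: assumes "good v" "\<alpha> - k *\<^sub>R \<beta> \<in> spT" shows "v \<alpha> - k *\<^sub>R v \<beta> \<in> spT"
proof -
  have lin: "linear v" using assms(1) weyl_linear good_W by blast
  have "v (\<alpha> - k *\<^sub>R \<beta>) = v \<alpha> - k *\<^sub>R v \<beta>" using linear_diff[OF lin] linear_scale[OF lin] by simp
  thus ?thesis using good_span[OF assms] by simp
qed

abbreviation WM where "WM \<equiv> W_M R \<Delta> \<Theta>"

lemma WM_good: "w \<in> WM \<Longrightarrow> good w" unfolding W_M_def good_def by simp

lemma WM_simple_pos: assumes w: "w \<in> WM" and d: "\<delta> \<in> \<Theta>" shows "P (w \<delta>)"
proof (rule ccontr)
  assume np: "\<not> P (w \<delta>)"
  have wW: "w \<in> W" using w unfolding W_M_def by simp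
  have dD: "\<delta> \<in> \<Delta>" using d ThD by auto
  have dl: "\<delta> \<in> levi" using d T_levi by auto
  have "refl \<delta> \<circ> id \<in> weyl_group levi" by (rule weyl_group.weyl_step[OF weyl_group.weyl_id dl])
  hence "refl \<delta> \<in> weyl_group levi" by simp
  hence "len \<Delta> w \<le> len \<Delta> (w \<circ> refl \<delta>)" using w unfolding W_M_def by blast
  moreover have "len \<Delta> (w \<circ> refl \<delta>) = ninv (w \<circ> refl \<delta>)" using len_W weyl_comp[OF wW] weyl_step[OF weyl_id, of \<delta>] dD D_R by (metis comp_id subsetD)
  moreover have "ninv (w \<circ> refl \<delta>) = ninv w - 1 \<and> ninv w \<ge> 1" using ninv_step[OF wW dD] np by simp
  moreover have "len \<Delta> w = ninv w" using len_W[OF wW] .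
  ultimately show False by linarith
qed

lemma WM_levi_pos: assumes w: "w \<in> WM" and a: "\<alpha> \<in> levi" "P \<alpha>" shows "P (w \<alpha>)"
proof -
  have wW: "w \<in> W" using w unfolding W_M_def by simp
  have aR: "\<alpha> \<in> R" and aT: "\<alpha> \<in> spT" using a levi_iff by auto
  obtain c where c: "\<alpha> = (\<Sum>\<delta>\<in>\<Delta>. c \<delta> *\<^sub>R \<delta>)" using root_rep[OF aR] by blast
  have ge: "\<forall>\<delta>\<in>\<Delta>. c \<delta> \<ge> 0" using pos_coef_ge[OF a(2) c] by blast
  have z: "(0::'a) = (\<Sum>\<delta>\<in>\<Delta>. (\<lambda>_. 0::real) \<delta> *\<^sub>R \<delta>)" by simp
  have c0: "\<forall>\<gamma>\<in>\<Delta> - \<Theta>. c \<gamma> = 0"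
  proof
    fix \<gamma> assume "\<gamma> \<in> \<Delta> - \<Theta>"
    thus "c \<gamma> = 0" using coef_span_rel[OF c z, of 1 \<gamma>] aT by simp
  qed
  have "\<alpha> = (\<Sum>\<delta>\<in>\<Theta>. c \<delta> *\<^sub>R \<delta>)" unfolding c
    using finD ThD c0 by (intro sum.mono_neutral_right) auto
  hence "w \<alpha> = (\<Sum>\<delta>\<in>\<Theta>. c \<delta> *\<^sub>R w \<delta>)"
    by (simp add: linear_sum[OF weyl_linear[OF wW]] linear_scale[OF weyl_linear[OF wW]])
  moreover have "\<forall>\<delta>\<in>\<Theta>. c \<delta> \<ge> 0 \<and> P (w \<delta>)" using ge ThD WM_simple_pos[OF w] by auto
  ultimately show ?thesis using pos_comb[OF weyl_mapsR[OF wW aR] finT] by blast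
qed

lemma WM_levi_sign: assumes w: "w \<in> WM" and a: "\<alpha> \<in> levi" shows "P (w \<alpha>) \<longleftrightarrow> P \<alpha>"
proof -
  have wW: "w \<in> W" using w unfolding W_M_def by simp
  have aR: "\<alpha> \<in> R" using a levi_iff by auto
  have na: "- \<alpha> \<in> levi" using a neg_R span_neg levi_iff by auto
  show ?thesis
  proof
    assume "P (w \<alpha>)" show "P \<alpha>"
    proof (rule ccontr)
      assume "\<not> P \<alpha>"
      hence "P (- \<alpha>)" using pos_neg_iff[OF aR] by simp
      hence "P (w (- \<alpha>))" using WM_levi_pos[OF w na] by simp
      hence "P (- w \<alpha>)" using weyl_neg[OF wW] by simp
      thus False using \<open>P (w \<alpha>)\<close> not_both by blast
    qed
  qed (rule WM_levi_pos[OF w a])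
qed

end

context RSM begin

abbreviation RM where "RM \<equiv> roots_AM R \<Theta>"
definition rep where "rep \<beta> = (SOME \<alpha>. \<alpha> \<in> R \<and> \<alpha> \<notin> spT \<and> res \<alpha> = \<beta>)"
definition posM where "posM \<beta> \<longleftrightarrow> P (rep \<beta>)"
definition act where "act v \<beta> = res (v (rep \<beta>))"
definition negM where "negM \<beta> = res (- rep \<beta>)"
abbreviation red where "red \<equiv> reduced_AM R \<Theta>"
definition RedM where "RedM = {\<beta>. red \<beta>}"

lemma RM_iff: "\<beta> \<in> RM \<longleftrightarrow> (\<exists>\<alpha>. \<alpha> \<in> R \<and> \<alpha> \<notin> spT \<and> res \<alpha> = \<beta>)"
  unfolding roots_AM_def using res0_iff by auto

lemma res_RM: "\<alpha> \<in> R \<Longrightarrow> \<alpha> \<notin> spT \<Longrightarrow> res \<alpha> \<in> RM" using RM_iff by blast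

lemma rep_props: assumes "\<beta> \<in> RM" shows "rep \<beta> \<in> R" "rep \<beta> \<notin> spT" "res (rep \<beta>) = \<beta>"
proof -
  have "\<exists>\<alpha>. \<alpha> \<in> R \<and> \<alpha> \<notin> spT \<and> res \<alpha> = \<beta>" using assms RM_iff by blast
  hence "rep \<beta> \<in> R \<and> rep \<beta> \<notin> spT \<and> res (rep \<beta>) = \<beta>" unfolding rep_def by (rule someI_ex)
  thus "rep \<beta> \<in> R" "rep \<beta> \<notin> spT" "res (rep \<beta>) = \<beta>" by auto
qed

lemma rep_res: assumes "\<alpha> \<in> R" "\<alpha> \<notin> spT" shows "rep (res \<alpha>) - \<alpha> \<in> spT"
  using rep_props(3)[OF res_RM[OF assms]] res_eq_iff by blast

lemma finRM: "finite RM" unfolding roots_AM_def using finR by simp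

lemma rel_shift:
  assumes "a - k *\<^sub>R b \<in> spT" "b' - b \<in> spT" shows "a - k *\<^sub>R b' \<in> spT"
proof -
  have eq: "a - k *\<^sub>R b' = (a - k *\<^sub>R b) - k *\<^sub>R (b' - b)" by (simp add: algebra_simps)
  have h: "(a - k *\<^sub>R b) - k *\<^sub>R (b' - b) \<in> spT" using span_diff[OF assms(1) span_scale[OF assms(2)]] .
  show ?thesis unfolding eq using h .
qed

lemma rel_shift_left:
  assumes "a - k *\<^sub>R b \<in> spT" "a' - a \<in> spT" shows "a' - k *\<^sub>R b \<in> spT"
proof -
  have eq: "a' - k *\<^sub>R b = (a - k *\<^sub>R b) + (a' - a)" by (simp add: algebra_simps)
  have h: "(a - k *\<^sub>R b) + (a' - a) \<in> spT" using span_add[OF assms(1) assms(2)] .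
  show ?thesis unfolding eq using h .
qed

lemma posM_res: assumes "\<alpha> \<in> R" "\<alpha> \<notin> spT" shows "posM (res \<alpha>) \<longleftrightarrow> P \<alpha>"
proof -
  have r: "res \<alpha> \<in> RM" using res_RM[OF assms] .
  show ?thesis unfolding posM_def
    using sign_rel[OF rep_props(1)[OF r] assms(1) rep_props(2)[OF r], of 1] rep_res[OF assms] by simp
qed

lemma act_res: assumes "good v" "\<alpha> \<in> R" "\<alpha> \<notin> spT" shows "act v (res \<alpha>) = res (v \<alpha>)"
proof -
  have "v (rep (res \<alpha>)) - 1 *\<^sub>R v \<alpha> \<in> spT" using good_rel[OF assms(1), of _ 1] rep_res[OF assms(2,3)] by simp
  thus ?thesis unfolding act_def using res_eq_iff by simp
qed

lemma good_R: "good v \<Longrightarrow> \<alpha> \<in> R \<Longrightarrow> v \<alpha> \<in> R" using weyl_mapsR good_W by blast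

lemma act_RM: assumes "good v" "\<beta> \<in> RM" shows "act v \<beta> \<in> RM"
  unfolding act_def using res_RM[OF good_R[OF assms(1) rep_props(1)[OF assms(2)]] nonlevi_pres[OF assms(1) rep_props(1,2)[OF assms(2)]]] .

lemma act_comp: assumes "good w" "good w'" "\<beta> \<in> RM" shows "act (w \<circ> w') \<beta> = act w (act w' \<beta>)"
proof -
  have r: "rep \<beta> \<in> R" "rep \<beta> \<notin> spT" using rep_props[OF assms(3)] by auto
  have "act w (act w' \<beta>) = act w (res (w' (rep \<beta>)))" unfolding act_def ..
  also have "\<dots> = res (w (w' (rep \<beta>)))"
    using act_res[OF assms(1) good_R[OF assms(2) r(1)] nonlevi_pres[OF assms(2) r]] .
  finally show ?thesis unfolding act_def by simp
qed

lemma act_inv: assumes "good v" "good u" "\<forall>x. u (v x) = x" "\<beta> \<in> RM" shows "act u (act v \<beta>) = \<beta>"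
proof -
  have "act u (act v \<beta>) = act (u \<circ> v) \<beta>" using act_comp[OF assms(2,1,4)] by simp
  also have "u \<circ> v = id" using assms(3) by auto
  finally show ?thesis unfolding act_def using rep_props(3)[OF assms(4)] by simp
qed

lemma posM_act: assumes "good v" "\<beta> \<in> RM" shows "posM (act v \<beta>) \<longleftrightarrow> P (v (rep \<beta>))"
  unfolding act_def using posM_res[OF good_R[OF assms(1) rep_props(1)[OF assms(2)]] nonlevi_pres[OF assms(1) rep_props(1,2)[OF assms(2)]]] .

lemma negM_res: assumes "\<alpha> \<in> R" "\<alpha> \<notin> spT" shows "negM (res \<alpha>) = res (- \<alpha>)"
proof -
  have "rep (res \<alpha>) - \<alpha> \<in> spT" using rep_res[OF assms] .
  hence "- rep (res \<alpha>) - (- \<alpha>) \<in> spT" using span_neg by fastforce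
  thus ?thesis unfolding negM_def using res_eq_iff by blast
qed

lemma neg_nonlevi: "\<alpha> \<in> R \<Longrightarrow> \<alpha> \<notin> spT \<Longrightarrow> - \<alpha> \<in> R \<and> - \<alpha> \<notin> spT"
  using neg_R span_neg by fastforce

lemma negM_RM: assumes "\<beta> \<in> RM" shows "negM \<beta> \<in> RM"
  unfolding negM_def using res_RM neg_nonlevi rep_props[OF assms] by blast

lemma posM_negM: assumes "\<beta> \<in> RM" shows "posM (negM \<beta>) \<longleftrightarrow> \<not> posM \<beta>"
proof -
  have r: "rep \<beta> \<in> R" "rep \<beta> \<notin> spT" using rep_props[OF assms] by auto
  have n: "- rep \<beta> \<in> R" "- rep \<beta> \<notin> spT" using neg_nonlevi[OF r] by auto
  show ?thesis unfolding negM_def using posM_res[OF n] pos_neg_iff[OF r(1)] unfolding posM_def by simp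
qed

lemma negM_negM: assumes "\<beta> \<in> RM" shows "negM (negM \<beta>) = \<beta>"
proof -
  have r: "rep \<beta> \<in> R" "rep \<beta> \<notin> spT" using rep_props[OF assms] by auto
  have n: "- rep \<beta> \<in> R" "- rep \<beta> \<notin> spT" using neg_nonlevi[OF r] by auto
  have "negM (negM \<beta>) = res (- (- rep \<beta>))" unfolding negM_def[of \<beta>] using negM_res[OF n] .
  thus ?thesis using rep_props(3)[OF assms] by simp
qed

lemma act_negM: assumes "good v" "\<beta> \<in> RM" shows "act v (negM \<beta>) = negM (act v \<beta>)"
proof -
  have r: "rep \<beta> \<in> R" "rep \<beta> \<notin> spT" using rep_props[OF assms(2)] by auto
  have n: "- rep \<beta> \<in> R" "- rep \<beta> \<notin> spT" using neg_nonlevi[OF r] by auto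
  have vr: "v (rep \<beta>) \<in> R" "v (rep \<beta>) \<notin> spT" using good_R[OF assms(1) r(1)] nonlevi_pres[OF assms(1) r] by auto
  have "act v (negM \<beta>) = res (v (- rep \<beta>))" unfolding negM_def[of \<beta>] using act_res[OF assms(1) n] .
  also have "\<dots> = res (- v (rep \<beta>))" using weyl_neg[OF good_W[OF assms(1)]] by simp
  also have "\<dots> = negM (res (v (rep \<beta>)))" using negM_res[OF vr] by simp
  finally show ?thesis unfolding act_def .
qed

lemma red_iff: "red \<beta> \<longleftrightarrow> \<beta> \<in> RM \<and> \<not> (\<exists>\<gamma>\<in>RM. \<exists>c>1. rep \<beta> - c *\<^sub>R rep \<gamma> \<in> spT)"
proof -
  have "\<beta> \<in> RM \<Longrightarrow> \<gamma> \<in> RM \<Longrightarrow> (\<forall>x\<in>aMM. \<beta> x = c * \<gamma> x) \<longleftrightarrow> rep \<beta> - c *\<^sub>R rep \<gamma> \<in> spT" for \<gamma> c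
    using mult_rel_iff[of "rep \<beta>" c "rep \<gamma>"] rep_props(3) by simp
  thus ?thesis unfolding reduced_AM_def by (metis (no_types, lifting))
qed

lemma RedM_RM: "RedM \<subseteq> RM" unfolding RedM_def using red_iff by blast
lemma finRedM: "finite RedM" using finite_subset[OF RedM_RM finRM] .

lemma act_red: assumes v: "good v" and u: "good u" and uv: "\<forall>x. u (v x) = x" and b: "\<beta> \<in> RedM"
  shows "act v \<beta> \<in> RedM"
proof -
  have bRM: "\<beta> \<in> RM" using b RedM_RM by auto
  have r: "rep \<beta> \<in> R" "rep \<beta> \<notin> spT" using rep_props[OF bRM] by auto
  have vr: "v (rep \<beta>) \<in> R" "v (rep \<beta>) \<notin> spT" using good_R[OF v r(1)] nonlevi_pres[OF v r] by auto
  have aRM: "act v \<beta> \<in> RM" using act_RM[OF v bRM] .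
  have nb: "\<not> (\<exists>\<gamma>\<in>RM. \<exists>c>1. rep \<beta> - c *\<^sub>R rep \<gamma> \<in> spT)" using b red_iff unfolding RedM_def by blast
  have "\<not> (\<exists>\<gamma>\<in>RM. \<exists>c>1. rep (act v \<beta>) - c *\<^sub>R rep \<gamma> \<in> spT)"
  proof
    assume "\<exists>\<gamma>\<in>RM. \<exists>c>1. rep (act v \<beta>) - c *\<^sub>R rep \<gamma> \<in> spT"
    then obtain \<gamma> c where g: "\<gamma> \<in> RM" "c > 1" "rep (act v \<beta>) - c *\<^sub>R rep \<gamma> \<in> spT" by blast
    have gr: "rep \<gamma> \<in> R" "rep \<gamma> \<notin> spT" using rep_props[OF g(1)] by auto
    have "rep (act v \<beta>) - v (rep \<beta>) \<in> spT" unfolding act_def using rep_res[OF vr] .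
    hence "v (rep \<beta>) - c *\<^sub>R rep \<gamma> \<in> spT" using rel_shift_left[OF g(3)]
      by (metis minus_diff_eq span_neg)
    hence "u (v (rep \<beta>)) - c *\<^sub>R u (rep \<gamma>) \<in> spT" using good_rel[OF u] by blast
    hence e1: "rep \<beta> - c *\<^sub>R u (rep \<gamma>) \<in> spT" using uv by simp
    have ug: "u (rep \<gamma>) \<in> R" "u (rep \<gamma>) \<notin> spT" using good_R[OF u gr(1)] nonlevi_pres[OF u gr] by auto
    have "rep \<beta> - c *\<^sub>R rep (res (u (rep \<gamma>))) \<in> spT" using rel_shift[OF e1 rep_res[OF ug]] .
    moreover have "res (u (rep \<gamma>)) \<in> RM" using res_RM[OF ug] .
    ultimately show False using nb g(2) by blast
  qed
  thus ?thesis using aRM red_iff unfolding RedM_def by blast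
qed

lemma neg_red: assumes b: "\<beta> \<in> RedM" shows "negM \<beta> \<in> RedM"
proof -
  have bRM: "\<beta> \<in> RM" using b RedM_RM by auto
  have r: "rep \<beta> \<in> R" "rep \<beta> \<notin> spT" using rep_props[OF bRM] by auto
  have n: "- rep \<beta> \<in> R" "- rep \<beta> \<notin> spT" using neg_nonlevi[OF r] by auto
  have nb: "\<not> (\<exists>\<gamma>\<in>RM. \<exists>c>1. rep \<beta> - c *\<^sub>R rep \<gamma> \<in> spT)" using b red_iff unfolding RedM_def by blast
  have "\<not> (\<exists>\<gamma>\<in>RM. \<exists>c>1. rep (negM \<beta>) - c *\<^sub>R rep \<gamma> \<in> spT)"
  proof
    assume "\<exists>\<gamma>\<in>RM. \<exists>c>1. rep (negM \<beta>) - c *\<^sub>R rep \<gamma> \<in> spT"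
    then obtain \<gamma> c where g: "\<gamma> \<in> RM" "c > 1" "rep (negM \<beta>) - c *\<^sub>R rep \<gamma> \<in> spT" by blast
    have gr: "rep \<gamma> \<in> R" "rep \<gamma> \<notin> spT" using rep_props[OF g(1)] by auto
    have ng: "- rep \<gamma> \<in> R" "- rep \<gamma> \<notin> spT" using neg_nonlevi[OF gr] by auto
    have "rep (negM \<beta>) - (- rep \<beta>) \<in> spT" unfolding negM_def using rep_res[OF n] .
    hence "- rep \<beta> - c *\<^sub>R rep \<gamma> \<in> spT" using rel_shift_left[OF g(3)]
      by (metis minus_diff_eq span_neg)
    hence "- (- rep \<beta> - c *\<^sub>R rep \<gamma>) \<in> spT" by (rule span_neg)
    hence e1: "rep \<beta> - c *\<^sub>R (- rep \<gamma>) \<in> spT" by (simp add: algebra_simps)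
    have "rep \<beta> - c *\<^sub>R rep (res (- rep \<gamma>)) \<in> spT" using rel_shift[OF e1 rep_res[OF ng]] .
    moreover have "res (- rep \<gamma>) \<in> RM" using res_RM[OF ng] .
    ultimately show False using nb g(2) by blast
  qed
  thus ?thesis using negM_RM[OF bRM] red_iff unfolding RedM_def by blast
qed

end

context RSM begin

definition SM where "SM u = {\<beta> \<in> RedM. posM \<beta> \<and> \<not> posM (act u \<beta>)}"
definition NM where "NM u = {\<beta> \<in> RedM. \<not> posM \<beta> \<and> posM (act u \<beta>)}"
definition DM where "DM u = {\<beta> \<in> RedM. posM \<beta> \<noteq> posM (act u \<beta>)}"

definition inv_pair where "inv_pair u v \<longleftrightarrow> good u \<and> good v \<and> (\<forall>x. u (v x) = x) \<and> (\<forall>x. v (u x) = x)"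

lemma inv_pair_sym: "inv_pair u v \<Longrightarrow> inv_pair v u" unfolding inv_pair_def by auto

lemma good_has_inv: "good v \<Longrightarrow> \<exists>u. inv_pair u v"
  using good_inv unfolding inv_pair_def by blast

lemma roots_P_iff: assumes "\<beta> \<in> RM" shows "\<beta> \<in> roots_P R \<Delta> \<Theta> \<longleftrightarrow> posM \<beta>"
proof
  assume "\<beta> \<in> roots_P R \<Delta> \<Theta>"
  then obtain \<alpha> where a: "P \<alpha>" "\<beta> = res \<alpha>" "\<beta> \<noteq> res 0" unfolding roots_P_def by blast
  have aR: "\<alpha> \<in> R" using pos_R[OF a(1)] .
  have "\<alpha> \<notin> spT" using a(2,3) res0_iff by simp
  thus "posM \<beta>" using posM_res[OF aR] a by simp
next
  assume "posM \<beta>"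
  hence "P (rep \<beta>)" unfolding posM_def .
  moreover have "\<beta> \<noteq> res 0" using assms unfolding roots_AM_def by simp
  ultimately show "\<beta> \<in> roots_P R \<Delta> \<Theta>" unfolding roots_P_def using rep_props(3)[OF assms] by force
qed

lemma conj_iff: assumes uv: "inv_pair u v" and b: "\<beta> \<in> RM"
  shows "\<beta> \<in> roots_conj_opp R \<Delta> \<Theta> v \<longleftrightarrow> \<not> posM (act u \<beta>)"
proof -
  have u: "good u" and v: "good v" and inv1: "\<forall>x. u (v x) = x" and inv2: "\<forall>x. v (u x) = x"
    using uv unfolding inv_pair_def by auto
  show ?thesis
  proof
    assume "\<beta> \<in> roots_conj_opp R \<Delta> \<Theta> v"
    then obtain \<gamma> where g: "negative_root R \<Delta> \<gamma>" "\<beta> = res (v \<gamma>)" "\<beta> \<noteq> res 0"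
      unfolding roots_conj_opp_def by blast
    have gR: "\<gamma> \<in> R" "\<not> P \<gamma>" using g(1) negative_iff by auto
    have vgT: "v \<gamma> \<notin> spT" using g(2,3) res0_iff by simp
    have gT: "\<gamma> \<notin> spT" using good_span[OF v] vgT by blast
    have "act u \<beta> = res (u (v \<gamma>))" using act_res[OF u good_R[OF v gR(1)] vgT] g(2) by simp
    hence "act u \<beta> = res \<gamma>" using inv1 by simp
    thus "\<not> posM (act u \<beta>)" using posM_res[OF gR(1) gT] gR(2) by simp
  next
    assume np: "\<not> posM (act u \<beta>)"
    have r: "rep \<beta> \<in> R" "rep \<beta> \<notin> spT" using rep_props[OF b] by auto
    define \<gamma> where "\<gamma> = u (rep \<beta>)"
    have gR: "\<gamma> \<in> R" "\<gamma> \<notin> spT" unfolding \<gamma>_def using good_R[OF u r(1)] nonlevi_pres[OF u r] by auto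
    have "\<not> P \<gamma>" using np posM_act[OF u b] unfolding \<gamma>_def by simp
    hence ng: "negative_root R \<Delta> \<gamma>" using negative_iff gR by simp
    have "res (v \<gamma>) = \<beta>" unfolding \<gamma>_def using inv2 rep_props(3)[OF b] by simp
    moreover have "\<beta> \<noteq> res 0" using b unfolding roots_AM_def by simp
    ultimately show "\<beta> \<in> roots_conj_opp R \<Delta> \<Theta> v" unfolding roots_conj_opp_def using ng by blast
  qed
qed

lemma lM_SM: assumes uv: "inv_pair u v" shows "lM R \<Delta> \<Theta> v = card (SM u)"
proof -
  have "{\<beta>. red \<beta> \<and> \<beta> \<in> roots_P R \<Delta> \<Theta> \<and> \<beta> \<in> roots_conj_opp R \<Delta> \<Theta> v} = SM u"
  proof (intro set_eqI iffI)
    fix \<beta> assume "\<beta> \<in> {\<beta>. red \<beta> \<and> \<beta> \<in> roots_P R \<Delta> \<Theta> \<and> \<beta> \<in> roots_conj_opp R \<Delta> \<Theta> v}"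
    hence h: "red \<beta>" "\<beta> \<in> roots_P R \<Delta> \<Theta>" "\<beta> \<in> roots_conj_opp R \<Delta> \<Theta> v" by auto
    have bRM: "\<beta> \<in> RM" using h(1) red_iff by blast
    show "\<beta> \<in> SM u" unfolding SM_def RedM_def using h roots_P_iff[OF bRM] conj_iff[OF uv bRM] by simp
  next
    fix \<beta> assume "\<beta> \<in> SM u"
    hence h: "red \<beta>" "posM \<beta>" "\<not> posM (act u \<beta>)" unfolding SM_def RedM_def by auto
    have bRM: "\<beta> \<in> RM" using h(1) red_iff by blast
    show "\<beta> \<in> {\<beta>. red \<beta> \<and> \<beta> \<in> roots_P R \<Delta> \<Theta> \<and> \<beta> \<in> roots_conj_opp R \<Delta> \<Theta> v}"
      using h roots_P_iff[OF bRM] conj_iff[OF uv bRM] by simp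
  qed
  thus ?thesis unfolding lM_def by simp
qed

lemma negM_inj: "inj_on negM RM" by (metis inj_onI negM_negM)

lemma card_DM: assumes u: "good u" shows "card (DM u) = 2 * card (SM u)"
proof -
  have un: "DM u = SM u \<union> NM u" unfolding DM_def SM_def NM_def by auto
  have dj: "SM u \<inter> NM u = {}" unfolding SM_def NM_def by auto
  have fS: "finite (SM u)" unfolding SM_def using finRedM by simp
  have fN: "finite (NM u)" unfolding NM_def using finRedM by simp
  have im: "negM ` SM u = NM u"
  proof (intro set_eqI iffI)
    fix x assume "x \<in> negM ` SM u"
    then obtain b where b: "b \<in> SM u" "x = negM b" by blast
    have bR: "b \<in> RedM" "posM b" "\<not> posM (act u b)" using b(1) unfolding SM_def by auto
    have bRM: "b \<in> RM" using bR RedM_RM by auto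
    show "x \<in> NM u" unfolding NM_def b(2)
      using neg_red[OF bR(1)] posM_negM[OF bRM] act_negM[OF u bRM] posM_negM[OF act_RM[OF u bRM]] bR by simp
  next
    fix x assume "x \<in> NM u"
    hence bR: "x \<in> RedM" "\<not> posM x" "posM (act u x)" unfolding NM_def by auto
    have bRM: "x \<in> RM" using bR RedM_RM by auto
    have "negM x \<in> SM u" unfolding SM_def
      using neg_red[OF bR(1)] posM_negM[OF bRM] act_negM[OF u bRM] posM_negM[OF act_RM[OF u bRM]] bR by simp
    moreover have "x = negM (negM x)" using negM_negM[OF bRM] by simp
    ultimately show "x \<in> negM ` SM u" by blast
  qed
  have "card (NM u) = card (SM u)" unfolding im[symmetric]
    by (rule card_image) (rule inj_on_subset[OF negM_inj], use RedM_RM in \<open>auto simp: SM_def\<close>)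
  thus ?thesis unfolding un using card_Un_disjoint[OF fS fN dj] by simp
qed

lemma act_bij: assumes uv: "inv_pair u v" shows "act v ` RedM = RedM" "inj_on (act v) RM"
proof -
  have u: "good u" and v: "good v" and inv1: "\<forall>x. u (v x) = x" and inv2: "\<forall>x. v (u x) = x"
    using uv unfolding inv_pair_def by auto
  show "act v ` RedM = RedM"
  proof
    show "act v ` RedM \<subseteq> RedM" using act_red[OF v u inv1] by blast
    show "RedM \<subseteq> act v ` RedM"
    proof
      fix b assume b: "b \<in> RedM"
      have "act u b \<in> RedM" using act_red[OF u v inv2 b] .
      moreover have "act v (act u b) = b" using act_inv[OF u v inv2] b RedM_RM by auto
      ultimately show "b \<in> act v ` RedM" by (metis image_eqI)
    qed
  qed
  show "inj_on (act v) RM" by (rule inj_onI) (metis act_inv[OF v u inv1])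
qed

lemma card_DM_inv: assumes uv: "inv_pair u v" shows "card (DM u) = card (DM v)"
proof -
  have u: "good u" and v: "good v" and inv1: "\<forall>x. u (v x) = x" and inv2: "\<forall>x. v (u x) = x"
    using uv unfolding inv_pair_def by auto
  have "act v ` DM v = DM u"
  proof (intro set_eqI iffI)
    fix x assume "x \<in> act v ` DM v"
    then obtain b where b: "b \<in> DM v" "x = act v b" by blast
    have bR: "b \<in> RedM" "posM b \<noteq> posM (act v b)" using b(1) unfolding DM_def by auto
    have "act u x = b" using b(2) act_inv[OF v u inv1] bR RedM_RM by auto
    thus "x \<in> DM u" unfolding DM_def using act_red[OF v u inv1 bR(1)] b(2) bR by auto
  next
    fix x assume "x \<in> DM u"
    hence bR: "x \<in> RedM" "posM x \<noteq> posM (act u x)" unfolding DM_def by auto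
    have "act v (act u x) = x" using act_inv[OF u v inv2] bR RedM_RM by auto
    moreover have "act u x \<in> DM v" unfolding DM_def using act_red[OF u v inv2 bR(1)] bR calculation by auto
    ultimately show "x \<in> act v ` DM v" by (metis image_eqI)
  qed
  moreover have "DM v \<subseteq> RM" using RedM_RM unfolding DM_def by auto
  hence "inj_on (act v) (DM v)" using inj_on_subset[OF act_bij(2)[OF uv]] by blast
  ultimately show ?thesis using card_image by metis
qed

lemma two_lM: assumes v: "good v" shows "2 * lM R \<Delta> \<Theta> v = card (DM v)"
proof -
  obtain u where uv: "inv_pair u v" using good_has_inv[OF v] by blast
  have "lM R \<Delta> \<Theta> v = card (SM u)" using lM_SM[OF uv] .
  moreover have "card (DM u) = 2 * card (SM u)" using card_DM uv unfolding inv_pair_def by blast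
  moreover have "card (DM u) = card (DM v)" using card_DM_inv[OF uv] .
  ultimately show ?thesis by simp
qed

end

context RSM begin

definition EM where "EM w w' = {\<beta> \<in> RedM. posM \<beta> \<noteq> posM (act w' \<beta>) \<and> posM (act w' \<beta>) \<noteq> posM (act w (act w' \<beta>))}"

lemma card_DM_comp:
  assumes w: "good w" and w': "good w'"
  shows "card (DM (w \<circ> w')) + 2 * card (EM w w') = card (DM w) + card (DM w')"
proof -
  obtain u where uv: "inv_pair u w'" using good_has_inv[OF w'] by blast
  have cw: "card (DM w) = card {\<beta> \<in> RedM. posM (act w' \<beta>) \<noteq> posM (act w (act w' \<beta>))}"
  proof -
    have e1: "act w' ` {\<beta> \<in> RedM. posM (act w' \<beta>) \<noteq> posM (act w (act w' \<beta>))} = {\<gamma> \<in> act w' ` RedM. posM \<gamma> \<noteq> posM (act w \<gamma>)}" by auto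
    have e2: "act w' ` {\<beta> \<in> RedM. posM (act w' \<beta>) \<noteq> posM (act w (act w' \<beta>))} = DM w"
      unfolding e1 act_bij(1)[OF uv] DM_def ..
    have sub: "{\<beta> \<in> RedM. posM (act w' \<beta>) \<noteq> posM (act w (act w' \<beta>))} \<subseteq> RM" using RedM_RM by auto
    have inj: "inj_on (act w') {\<beta> \<in> RedM. posM (act w' \<beta>) \<noteq> posM (act w (act w' \<beta>))}"
      using inj_on_subset[OF act_bij(2)[OF uv] sub] .
    show ?thesis using card_image[OF inj] unfolding e2 by simp
  qed
  have dc: "DM (w \<circ> w') = {\<beta> \<in> RedM. posM \<beta> \<noteq> posM (act w (act w' \<beta>))}"
    unfolding DM_def using act_comp[OF w w'] RedM_RM by auto
  have pw: "\<And>a b c. (if a \<noteq> c then 1 else 0) + 2 * (if a \<noteq> b \<and> b \<noteq> (c::bool) then 1 else 0) =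
     (if b \<noteq> c then 1 else 0) + (if a \<noteq> b then 1 else (0::nat))" by auto
  have "card (DM (w \<circ> w')) + 2 * card (EM w w') =
     (\<Sum>x\<in>RedM. (if posM x \<noteq> posM (act w (act w' x)) then 1 else 0) + 2 * (if posM x \<noteq> posM (act w' x) \<and> posM (act w' x) \<noteq> posM (act w (act w' x)) then 1 else 0))"
    unfolding dc EM_def card_filter_sum[OF finRedM] sum.distrib sum_distrib_left by simp
  also have "\<dots> = (\<Sum>x\<in>RedM. (if posM (act w' x) \<noteq> posM (act w (act w' x)) then 1 else 0) + (if posM x \<noteq> posM (act w' x) then 1 else 0))"
    by (rule sum.cong[OF refl]) (rule pw)
  also have "\<dots> = card {\<beta> \<in> RedM. posM (act w' \<beta>) \<noteq> posM (act w (act w' \<beta>))} + card (DM w')"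
    unfolding DM_def card_filter_sum[OF finRedM] sum.distrib by simp
  finally show ?thesis using cw by simp
qed

lemma red_multiple:
  assumes a: "\<alpha> \<in> R" "\<alpha> \<notin> spT"
  shows "\<exists>\<gamma>\<in>RedM. \<exists>k>0. \<alpha> - k *\<^sub>R rep \<gamma> \<in> spT"
proof -
  define K where "K = {k::real. k > 0 \<and> (\<exists>\<gamma>\<in>RM. \<alpha> - k *\<^sub>R rep \<gamma> \<in> spT)}"
  define g where "g \<gamma> = (SOME k::real. k > 0 \<and> \<alpha> - k *\<^sub>R rep \<gamma> \<in> spT)" for \<gamma>
  have uniq: "k1 = k2" if "\<gamma> \<in> RM" "\<alpha> - k1 *\<^sub>R rep \<gamma> \<in> spT" "\<alpha> - k2 *\<^sub>R rep \<gamma> \<in> spT" for \<gamma> k1 k2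
  proof (rule ccontr)
    assume ne: "k1 \<noteq> k2"
    have "(\<alpha> - k1 *\<^sub>R rep \<gamma>) - (\<alpha> - k2 *\<^sub>R rep \<gamma>) \<in> spT" using span_diff[OF that(2,3)] .
    hence "(k2 - k1) *\<^sub>R rep \<gamma> \<in> spT" by (simp add: algebra_simps)
    hence "inverse (k2 - k1) *\<^sub>R ((k2 - k1) *\<^sub>R rep \<gamma>) \<in> spT" by (rule span_scale)
    hence "rep \<gamma> \<in> spT" using ne by simp
    thus False using rep_props(2)[OF that(1)] by simp
  qed
  have "K \<subseteq> g ` RM"
  proof
    fix k assume "k \<in> K"
    then obtain \<gamma> where gm: "\<gamma> \<in> RM" "k > 0" "\<alpha> - k *\<^sub>R rep \<gamma> \<in> spT" unfolding K_def by blast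
    have "g \<gamma> > 0 \<and> \<alpha> - g \<gamma> *\<^sub>R rep \<gamma> \<in> spT" unfolding g_def by (rule someI[of _ k]) (use gm in simp)
    hence "g \<gamma> = k" using uniq[OF gm(1)] gm(3) by blast
    thus "k \<in> g ` RM" using gm(1) by (metis image_eqI)
  qed
  hence fK: "finite K" using finRM finite_surj by blast
  have ra: "res \<alpha> \<in> RM" using res_RM[OF a] .
  have "\<alpha> - 1 *\<^sub>R rep (res \<alpha>) \<in> spT" using span_neg[OF rep_res[OF a]] by simp
  hence "1 \<in> K" unfolding K_def using ra by auto
  hence ne: "K \<noteq> {}" by auto
  define km where "km = Max K"
  have kmK: "km \<in> K" unfolding km_def using Min_in Max_in[OF fK ne] by simp
  then obtain \<gamma> where gm: "\<gamma> \<in> RM" "km > 0" "\<alpha> - km *\<^sub>R rep \<gamma> \<in> spT" unfolding K_def by blast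
  have "\<gamma> \<in> RedM"
  proof -
    have "\<not> (\<exists>\<gamma>'\<in>RM. \<exists>c>1. rep \<gamma> - c *\<^sub>R rep \<gamma>' \<in> spT)"
    proof
      assume "\<exists>\<gamma>'\<in>RM. \<exists>c>1. rep \<gamma> - c *\<^sub>R rep \<gamma>' \<in> spT"
      then obtain \<gamma>' c where g': "\<gamma>' \<in> RM" "c > 1" "rep \<gamma> - c *\<^sub>R rep \<gamma>' \<in> spT" by blast
      have eq: "\<alpha> - (km * c) *\<^sub>R rep \<gamma>' = (\<alpha> - km *\<^sub>R rep \<gamma>) + km *\<^sub>R (rep \<gamma> - c *\<^sub>R rep \<gamma>')"
        by (simp add: algebra_simps)
      have "(\<alpha> - km *\<^sub>R rep \<gamma>) + km *\<^sub>R (rep \<gamma> - c *\<^sub>R rep \<gamma>') \<in> spT"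
        using span_add[OF gm(3) span_scale[OF g'(3)]] .
      hence "\<alpha> - (km * c) *\<^sub>R rep \<gamma>' \<in> spT" unfolding eq .
      moreover have "km * c > 0" using gm(2) g'(2) by simp
      ultimately have "km * c \<in> K" unfolding K_def using g'(1) by blast
      hence "km * c \<le> km" unfolding km_def using Max_ge[OF fK] by simp
      moreover have "km * 1 < km * c" using gm(2) g'(2) by (intro mult_strict_left_mono) auto
      ultimately show False by simp
    qed
    thus ?thesis using gm(1) red_iff unfolding RedM_def by blast
  qed
  thus ?thesis using gm by blast
qed

lemma EM_iff:
  assumes w: "w \<in> WM" and w': "w' \<in> WM"
  shows "EM w w' = {} \<longleftrightarrow> \<not> (\<exists>\<alpha>\<in>R. Eprop w w' \<alpha>)"
proof -
  have gw: "good w" and gw': "good w'" using WM_good w w' by auto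
  show ?thesis
  proof
    assume e: "EM w w' = {}"
    show "\<not> (\<exists>\<alpha>\<in>R. Eprop w w' \<alpha>)"
    proof
      assume "\<exists>\<alpha>\<in>R. Eprop w w' \<alpha>"
      then obtain \<alpha> where a: "\<alpha> \<in> R" "Eprop w w' \<alpha>" by blast
      have aT: "\<alpha> \<notin> spT"
      proof
        assume "\<alpha> \<in> spT"
        hence "\<alpha> \<in> levi" using a levi_iff by simp
        hence "P (w' \<alpha>) \<longleftrightarrow> P \<alpha>" using WM_levi_sign[OF w'] by simp
        thus False using a(2) unfolding Eprop_def by simp
      qed
      obtain \<gamma> k where gk: "\<gamma> \<in> RedM" "k > 0" "\<alpha> - k *\<^sub>R rep \<gamma> \<in> spT" using red_multiple[OF a(1) aT] by blast
      have gRM: "\<gamma> \<in> RM" using gk RedM_RM by auto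
      have r: "rep \<gamma> \<in> R" "rep \<gamma> \<notin> spT" using rep_props[OF gRM] by auto
      have r1: "w' (rep \<gamma>) \<in> R" "w' (rep \<gamma>) \<notin> spT" using good_R[OF gw' r(1)] nonlevi_pres[OF gw' r] by auto
      have r2: "w (w' (rep \<gamma>)) \<in> R" "w (w' (rep \<gamma>)) \<notin> spT" using good_R[OF gw r1(1)] nonlevi_pres[OF gw r1] by auto
      have a1: "w' \<alpha> \<in> R" "w' \<alpha> \<notin> spT" using good_R[OF gw' a(1)] nonlevi_pres[OF gw' a(1) aT] by auto
      have a2: "w (w' \<alpha>) \<in> R" "w (w' \<alpha>) \<notin> spT" using good_R[OF gw a1(1)] nonlevi_pres[OF gw a1] by auto
      have s0: "P \<alpha> \<longleftrightarrow> P (rep \<gamma>)" using sign_rel[OF a(1) r(1) aT gk(2,3)] .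
      have rel1: "w' \<alpha> - k *\<^sub>R w' (rep \<gamma>) \<in> spT" using good_rel[OF gw' gk(3)] .
      have s1: "P (w' \<alpha>) \<longleftrightarrow> P (w' (rep \<gamma>))" using sign_rel[OF a1(1) r1(1) a1(2) gk(2) rel1] .
      have rel2: "w (w' \<alpha>) - k *\<^sub>R w (w' (rep \<gamma>)) \<in> spT" using good_rel[OF gw rel1] .
      have s2: "P (w (w' \<alpha>)) \<longleftrightarrow> P (w (w' (rep \<gamma>)))" using sign_rel[OF a2(1) r2(1) a2(2) gk(2) rel2] .
      have p1: "posM (act w' \<gamma>) \<longleftrightarrow> P (w' (rep \<gamma>))" using posM_act[OF gw' gRM] .
      have p2: "posM (act w (act w' \<gamma>)) \<longleftrightarrow> P (w (w' (rep \<gamma>)))"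
        using posM_act[OF gw act_RM[OF gw' gRM]] act_res[OF gw' r] unfolding act_def[of w' \<gamma>]
        by (metis act_def act_res[OF gw r1] posM_res[OF r2])
      have p0: "posM \<gamma> \<longleftrightarrow> P (rep \<gamma>)" unfolding posM_def ..
      have "\<gamma> \<in> EM w w'" unfolding EM_def using gk(1) a(2) s0 s1 s2 p0 p1 p2 unfolding Eprop_def by simp
      thus False using e by simp
    qed
  next
    assume ne: "\<not> (\<exists>\<alpha>\<in>R. Eprop w w' \<alpha>)"
    show "EM w w' = {}"
    proof (rule ccontr)
      assume "EM w w' \<noteq> {}"
      then obtain \<beta> where b: "\<beta> \<in> EM w w'" by blast
      have bR: "\<beta> \<in> RedM" using b unfolding EM_def by simp
      have bRM: "\<beta> \<in> RM" using bR RedM_RM by auto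
      have r: "rep \<beta> \<in> R" "rep \<beta> \<notin> spT" using rep_props[OF bRM] by auto
      have r1: "w' (rep \<beta>) \<in> R" "w' (rep \<beta>) \<notin> spT" using good_R[OF gw' r(1)] nonlevi_pres[OF gw' r] by auto
      have p1: "posM (act w' \<beta>) \<longleftrightarrow> P (w' (rep \<beta>))" using posM_act[OF gw' bRM] .
      have p2: "posM (act w (act w' \<beta>)) \<longleftrightarrow> P (w (w' (rep \<beta>)))"
        using act_comp[OF gw gw' bRM] posM_act[OF good_comp[OF gw gw'] bRM] by simp
      have p0: "posM \<beta> \<longleftrightarrow> P (rep \<beta>)" unfolding posM_def ..
      have "Eprop w w' (rep \<beta>)" using b p0 p1 p2 unfolding EM_def Eprop_def by simp
      thus False using ne r(1) by blast
    qed
  qed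
qed

theorem main:
  assumes w: "w \<in> WM" and w': "w' \<in> WM"
  shows "lM R \<Delta> \<Theta> (w \<circ> w') = lM R \<Delta> \<Theta> w + lM R \<Delta> \<Theta> w' \<longleftrightarrow> len \<Delta> (w \<circ> w') = len \<Delta> w + len \<Delta> w'"
proof -
  have gw: "good w" and gw': "good w'" using WM_good w w' by auto
  have gww: "good (w \<circ> w')" using good_comp[OF gw gw'] .
  have "lM R \<Delta> \<Theta> (w \<circ> w') = lM R \<Delta> \<Theta> w + lM R \<Delta> \<Theta> w' \<longleftrightarrow>
      card (DM (w \<circ> w')) = card (DM w) + card (DM w')"
    using two_lM[OF gw] two_lM[OF gw'] two_lM[OF gww] by auto
  also have "\<dots> \<longleftrightarrow> card (EM w w') = 0" using card_DM_comp[OF gw gw'] by auto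
  also have "\<dots> \<longleftrightarrow> EM w w' = {}" using finRedM unfolding EM_def by simp
  also have "\<dots> \<longleftrightarrow> \<not> (\<exists>\<alpha>\<in>R. Eprop w w' \<alpha>)" using EM_iff[OF w w'] .
  also have "\<dots> \<longleftrightarrow> len \<Delta> (w \<circ> w') = len \<Delta> w + len \<Delta> w'"
    using len_additive_iff[OF good_W[OF gw] good_W[OF gw']] by simp
  finally show ?thesis .
qed

end

theorem proposition1p1:
  fixes R \<Delta> \<Theta> :: "'a::euclidean_space set" and w w' :: "'a \<Rightarrow> 'a"
  assumes "root_system R" and "is_base R \<Delta>" and "\<Theta> \<subseteq> \<Delta>"
    and "w \<in> W_M R \<Delta> \<Theta>" and "w' \<in> W_M R \<Delta> \<Theta>"
  shows "lM R \<Delta> \<Theta> (w \<circ> w') = lM R \<Delta> \<Theta> w + lM R \<Delta> \<Theta> w'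
     \<longleftrightarrow> len \<Delta> (w \<circ> w') = len \<Delta> w + len \<Delta> w'"
proof -
  interpret RSM R \<Delta> \<Theta> using assms(1,2,3) by unfold_locales
  show ?thesis using main[OF assms(4,5)] .
qed

end
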